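(* Let $n\geq 2$ and let $V$ be a simple weight $\mathfrak{gl}_n$-module such that $$(E_{l,l}-E_{l,j}E_{j,l}+E_{j,j}E_{l,l})\cdot V=0\quad\text{for all } l,j\in\{1,\dots,n\},\ l\neq j.$$ Then $V\cong N(\lambda)$ for some $\lambda\in\mathbb{C}^n$.
   Context: $E_{l,j}$ ($1\le l,j\le n$) are the matrix units of $\mathfrak{gl}_n$; a weight module is one on which all $E_{j,j}$ act diagonalizably. Let $e_1,\dots,e_n$ be the standard basis of $\mathbb{Z}^n$, and for $\mu\in\mathbb{C}^n$ let $|\mu|=\sum_j\mu_j$. For $\lambda\in\mathbb{C}^n$ let $S(\lambda)=X_1\times\dots\times X_n$, where $X_j=\lambda_j+\mathbb{Z}$ if $\lambda_j\notin\mathbb{Z}$, $X_j=\mathbb{Z}_{\ge 0}$ if $\lambda_j\in\mathbb{Z}_{\ge0}$, and $X_j=\{-1,-2,\dots\}$ if $\lambda_j\in\{-1,-2,\dots\}$. Let $W(\lambda)$ be the vector space with basis $\{y(\lambda'):\lambda'\in S(\lambda)\}$, with the convention $y(\mu)=0$ for $\mu\notin S(\lambda)$, and let $\mathfrak{gl}_n$ act by $E_{l,j}\,y(\lambda')=\lambda'_j\,y(\lambda'-e_j+e_l)$. Then $N(\lambda)=\mathrm{span}\{y(\lambda'):\lambda'\in S(\lambda),\ |\lambda'|=|\lambda|\}$ is a $\mathfrak{gl}_n$-submodule (a simple one). *)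

theory Defs
  imports Complex_Main
begin

text \<open>A gl_n-module: a complex vector space (the whole type 'v, with scalar
multiplication sc) together with operators E l j (1 <= l,j <= n) representing
the matrix units, which are complex-linear and satisfy the gl_n commutation
relations [E_ij, E_km] = delta_jk E_im - delta_mi E_kj.\<close>

definition glrep :: "nat \<Rightarrow> (complex \<Rightarrow> 'v::ab_group_add \<Rightarrow> 'v) \<Rightarrow> (nat \<Rightarrow> nat \<Rightarrow> 'v \<Rightarrow> 'v) \<Rightarrow> bool" where
  "glrep n sc E \<longleftrightarrow> vector_space sc \<and>
     (\<forall>l\<in>{1..n}. \<forall>j\<in>{1..n}. Vector_Spaces.linear sc sc (E l j)) \<and>
     (\<forall>i\<in>{1..n}. \<forall>j\<in>{1..n}. \<forall>k\<in>{1..n}. \<forall>m\<in>{1..n}. \<forall>v.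
        E i j (E k m v) - E k m (E i j v) =
        (if j = k then E i m v else 0) - (if m = i then E k j v else 0))"

definition gl_submodule :: "nat \<Rightarrow> (complex \<Rightarrow> 'v::ab_group_add \<Rightarrow> 'v) \<Rightarrow> (nat \<Rightarrow> nat \<Rightarrow> 'v \<Rightarrow> 'v) \<Rightarrow> 'v set \<Rightarrow> bool" where
  "gl_submodule n sc E W \<longleftrightarrow> module.subspace sc W \<and>
     (\<forall>l\<in>{1..n}. \<forall>j\<in>{1..n}. \<forall>w\<in>W. E l j w \<in> W)"

definition simple_gl_module :: "nat \<Rightarrow> (complex \<Rightarrow> 'v::ab_group_add \<Rightarrow> 'v) \<Rightarrow> (nat \<Rightarrow> nat \<Rightarrow> 'v \<Rightarrow> 'v) \<Rightarrow> bool" where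
  "simple_gl_module n sc E \<longleftrightarrow> (\<exists>v::'v. v \<noteq> 0) \<and>
     (\<forall>W. gl_submodule n sc E W \<longrightarrow> W = {0} \<or> W = UNIV)"

definition weight_gl_module :: "nat \<Rightarrow> (complex \<Rightarrow> 'v::ab_group_add \<Rightarrow> 'v) \<Rightarrow> (nat \<Rightarrow> nat \<Rightarrow> 'v \<Rightarrow> 'v) \<Rightarrow> bool" where
  "weight_gl_module n sc E \<longleftrightarrow>
     (\<forall>j\<in>{1..n}. module.span sc {v. \<exists>c. E j j v = sc c v} = UNIV)"

text \<open>Vectors in C^n are functions nat => complex, coordinates 1..n.\<close>
definition Xset :: "complex \<Rightarrow> complex set" where
  "Xset a = (if a \<in> \<nat> then {of_nat k | k. True}
             else if a \<in> \<int> then {- of_nat (Suc k) | k. True}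
             else {a + of_int k | k. True})"

definition Sset :: "nat \<Rightarrow> (nat \<Rightarrow> complex) \<Rightarrow> (nat \<Rightarrow> complex) set" where
  "Sset n lam = {mu. (\<forall>j\<in>{1..n}. mu j \<in> Xset (lam j)) \<and> (\<forall>j. j \<notin> {1..n} \<longrightarrow> mu j = 0)}"

definition wsum :: "nat \<Rightarrow> (nat \<Rightarrow> complex) \<Rightarrow> complex" where
  "wsum n mu = (\<Sum>j=1..n. mu j)"

definition shift :: "(nat \<Rightarrow> complex) \<Rightarrow> nat \<Rightarrow> nat \<Rightarrow> (nat \<Rightarrow> complex)" where
  "shift mu j l = (\<lambda>i. mu i + (if i = j then 1 else 0) - (if i = l then 1 else 0))"

text \<open>N(lambda): elements are coefficient functions f (f mu = coefficient of y(mu)),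
finitely supported on {mu in S(lambda). |mu| = |lambda|}.\<close>
definition Nspace :: "nat \<Rightarrow> (nat \<Rightarrow> complex) \<Rightarrow> ((nat \<Rightarrow> complex) \<Rightarrow> complex) set" where
  "Nspace n lam = {f. finite {mu. f mu \<noteq> 0} \<and>
      (\<forall>mu. f mu \<noteq> 0 \<longrightarrow> mu \<in> Sset n lam \<and> wsum n mu = wsum n lam)}"

text \<open>Action E_{l,j} y(mu') = mu'_j y(mu' - e_j + e_l) (with y(mu) = 0 for mu outside S),
written on coefficient functions.\<close>
definition NE :: "nat \<Rightarrow> (nat \<Rightarrow> complex) \<Rightarrow> nat \<Rightarrow> nat \<Rightarrow> ((nat \<Rightarrow> complex) \<Rightarrow> complex) \<Rightarrow> ((nat \<Rightarrow> complex) \<Rightarrow> complex)" where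
  "NE n lam l j f = (\<lambda>mu. if mu \<in> Sset n lam then shift mu j l j * f (shift mu j l) else 0)"

definition iso_to_N :: "nat \<Rightarrow> (complex \<Rightarrow> 'v::ab_group_add \<Rightarrow> 'v) \<Rightarrow> (nat \<Rightarrow> nat \<Rightarrow> 'v \<Rightarrow> 'v) \<Rightarrow> (nat \<Rightarrow> complex) \<Rightarrow> bool" where
  "iso_to_N n sc E lam \<longleftrightarrow> (\<exists>\<phi> :: 'v \<Rightarrow> ((nat \<Rightarrow> complex) \<Rightarrow> complex).
      (\<forall>u v mu. \<phi> (u + v) mu = \<phi> u mu + \<phi> v mu) \<and>
      (\<forall>c v mu. \<phi> (sc c v) mu = c * \<phi> v mu) \<and>
      bij_betw \<phi> UNIV (Nspace n lam) \<and>
      (\<forall>l\<in>{1..n}. \<forall>j\<in>{1..n}. \<forall>v. \<phi> (E l j v) = NE n lam l j (\<phi> v)))"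

end

theory Submission
  imports Defs
begin


fun wact :: "(nat \<Rightarrow> nat \<Rightarrow> 'a \<Rightarrow> 'a) \<Rightarrow> (nat \<times> nat) list \<Rightarrow> 'a \<Rightarrow> 'a" where
  "wact E [] v = v"
| "wact E ((a,b)#X) v = E a b (wact E X v)"

fun wt :: "(nat \<times> nat) list \<Rightarrow> nat \<Rightarrow> complex" where
  "wt [] = (\<lambda>_. 0)"
| "wt ((a,b)#X) = shift (wt X) a b"

fun cN :: "(nat \<times> nat) list \<Rightarrow> (nat \<Rightarrow> complex) \<Rightarrow> complex" where
  "cN [] mu = 1"
| "cN ((a,b)#X) mu = (mu b + wt X b) * cN X mu"

definition padd :: "(nat \<Rightarrow> complex) \<Rightarrow> (nat \<Rightarrow> complex) \<Rightarrow> (nat \<Rightarrow> complex)" where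
  "padd f g = (\<lambda>i. f i + g i)"

lemma wact_append: "wact E (X @ Y) v = wact E X (wact E Y v)"
  by (induction X) auto

lemma wt_append: "wt (X @ Y) = padd (wt X) (wt Y)"
  apply (induction X) apply (simp add: padd_def) apply (case_tac a) by (auto simp: padd_def shift_def)

lemma cN_append: "cN (X @ Y) mu = cN X (padd mu (wt Y)) * cN Y mu"
  apply (induction X) apply (simp add: padd_def) apply (case_tac a) by (auto simp: padd_def wt_append)

definition inr :: "nat \<Rightarrow> (nat \<times> nat) list \<Rightarrow> bool" where
  "inr n X \<longleftrightarrow> (\<forall>p\<in>set X. fst p \<in> {1..n} \<and> snd p \<in> {1..n})"

lemma inr_simps[simp]: "inr n [] " "inr n ((a,b)#X) \<longleftrightarrow> a \<in> {1..n} \<and> b \<in> {1..n} \<and> inr n X"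
  "inr n (X @ Y) \<longleftrightarrow> inr n X \<and> inr n Y"
  by (auto simp: inr_def)

lemma wt_single: "wt [(a,b)] = (\<lambda>i. (if i = a then 1 else 0) - (if i = b then 1 else 0))"
  by (auto simp: shift_def)

lemma wt_BTR: "wt (B @ T @ R) = padd (wt B) (padd (wt T) (wt R))" by (simp add: wt_append)

lemma cN_BTR: "cN (B @ T @ R) mu = cN B (padd mu (padd (wt T) (wt R))) * cN T (padd mu (wt R)) * cN R mu"
  by (simp add: cN_append wt_append)

lemma wt_nonneg_aux: "\<forall>p\<in>set A. snd p = l \<longrightarrow> fst p = l \<Longrightarrow> \<exists>k::nat. wt A l = of_nat k"
proof (induction A)
  case Nil then show ?case by (auto intro: exI[of _ 0])
next
  case (Cons p A)
  then obtain k where k: "wt A l = of_nat k" by auto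
  obtain a b where p: "p = (a,b)" by fastforce
  show ?case
  proof (cases "b = l")
    case True then have "a = l" using Cons p by auto
    then show ?thesis using k True p by (auto simp: shift_def)
  next
    case False then show ?thesis using k p
      by (auto simp: shift_def intro: exI[of _ "Suc k"] exI[of _ k])
  qed
qed

lemma exists_letter: assumes "wt A l = -1" shows "\<exists>B a M. A = B @ (a,l) # M \<and> a \<noteq> l"
proof -
  have "\<exists>p\<in>set A. snd p = l \<and> fst p \<noteq> l"
  proof (rule ccontr)
    assume "\<not> ?thesis"
    then obtain k :: nat where "wt A l = of_nat k" using wt_nonneg_aux[of A l] by auto
    with assms have "(of_nat k :: complex) = -1" by simp
    then have "Re (of_nat k :: complex) = Re (-1)" by simp
    then show False by simp
  qed
  then obtain p where "p \<in> set A" "snd p = l" "fst p \<noteq> l" by auto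
  then show ?thesis using split_list[of p A] by (metis prod.collapse)
qed

locale G =
  fixes n :: nat and sc :: "complex \<Rightarrow> 'v::ab_group_add \<Rightarrow> 'v" and E :: "nat \<Rightarrow> nat \<Rightarrow> 'v \<Rightarrow> 'v"
  assumes VS: "vector_space sc"
  and Eadd: "l \<in> {1..n} \<Longrightarrow> j \<in> {1..n} \<Longrightarrow> E l j (x + y) = E l j x + E l j y"
  and Esc: "l \<in> {1..n} \<Longrightarrow> j \<in> {1..n} \<Longrightarrow> E l j (sc c x) = sc c (E l j x)"
  and comm: "i \<in> {1..n} \<Longrightarrow> j \<in> {1..n} \<Longrightarrow> k \<in> {1..n} \<Longrightarrow> m \<in> {1..n} \<Longrightarrow>
        E i j (E k m v) - E k m (E i j v) =
        (if j = k then E i m v else 0) - (if m = i then E k j v else 0)"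
  and R: "l \<in> {1..n} \<Longrightarrow> j \<in> {1..n} \<Longrightarrow> l \<noteq> j \<Longrightarrow> E l l v - E l j (E j l v) + E j j (E l l v) = 0"
begin

sublocale vector_space sc by (rule VS)

lemma Ezero: "l \<in> {1..n} \<Longrightarrow> j \<in> {1..n} \<Longrightarrow> E l j 0 = 0"
  using Esc[of l j 0 0] by simp

lemma Ediff: "l \<in> {1..n} \<Longrightarrow> j \<in> {1..n} \<Longrightarrow> E l j (x - y) = E l j x - E l j y"
  by (metis Eadd add_diff_cancel eq_diff_eq)

lemma act_add: "inr n X \<Longrightarrow> wact E X (x + y) = wact E X x + wact E X y"
  apply (induction X) apply simp apply (case_tac a) by (auto simp: Eadd)
lemma act_diff: "inr n X \<Longrightarrow> wact E X (x - y) = wact E X x - wact E X y"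
  apply (induction X) apply simp apply (case_tac a) by (auto simp: Ediff)
lemma act_sc: "inr n X \<Longrightarrow> wact E X (sc c x) = sc c (wact E X x)"
  apply (induction X) apply simp apply (case_tac a) by (auto simp: Esc)
lemma act_zero: "inr n X \<Longrightarrow> wact E X 0 = 0"
  apply (induction X) apply simp apply (case_tac a) by (auto simp: Ezero)

definition wv :: "(nat \<Rightarrow> complex) \<Rightarrow> 'v \<Rightarrow> bool" where
  "wv mu v \<longleftrightarrow> (\<forall>j\<in>{1..n}. E j j v = sc (mu j) v)"

lemma wv_E: assumes "wv mu v" "a \<in> {1..n}" "b \<in> {1..n}" shows "wv (shift mu a b) (E a b v)"
  unfolding wv_def
proof
  fix j assume j: "j \<in> {1..n}"
  have "E j j (E a b v) - E a b (E j j v) = (if j = a then E j b v else 0) - (if b = j then E a j v else 0)"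
    using comm[OF j j assms(2,3)] by simp
  then have "E j j (E a b v) = sc (mu j) (E a b v) + (if j = a then E a b v else 0) - (if b = j then E a b v else 0)"
    using assms j by (auto simp: wv_def Esc algebra_simps)
  then show "E j j (E a b v) = sc (shift mu a b j) (E a b v)"
    by (auto simp: shift_def algebra_simps)
qed

lemma wv_act: "wv mu v \<Longrightarrow> inr n X \<Longrightarrow> wv (padd mu (wt X)) (wact E X v)"
proof (induction X)
  case Nil then show ?case by (simp add: padd_def)
next
  case (Cons p X) then obtain a b where p: "p = (a,b)" by fastforce
  have "wv (shift (padd mu (wt X)) a b) (E a b (wact E X v))"
    using Cons p by (intro wv_E) auto
  moreover have "shift (padd mu (wt X)) a b = padd mu (wt (p#X))"
    by (auto simp: p padd_def shift_def)
  ultimately show ?case by (simp add: p)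
qed

lemma derived: assumes "a \<in> {1..n}" "l \<in> {1..n}" "j \<in> {1..n}" "a \<noteq> l" "a \<noteq> j" "l \<noteq> j"
  shows "E a l (E l j w) = E a j w + E a j (E l l w)"
proof -
  note r = assms
  have c1: "E a j (E j j w) - E j j (E a j w) = E a j w"
    using comm[of a j j j w] r by simp
  have c2: "E a j (E j l u) - E j l (E a j u) = E a l u" for u
    using comm[of a j j l u] r by simp
  have c3: "E a j (E l j u) - E l j (E a j u) = 0" for u
    using comm[of a j l j u] r by simp
  have c4: "E a j (E l l u) - E l l (E a j u) = 0" for u
    using comm[of a j l l u] r by simp
  have c5: "E a j (E j j u) - E j j (E a j u) = E a j u" for u
    using comm[of a j j j u] r by simp
  have R1: "E j j w - E j l (E l j w) + E l l (E j j w) = 0" using R[of j l w] r by simp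
  have R2: "E j j (E a j w) - E j l (E l j (E a j w)) + E l l (E j j (E a j w)) = 0"
    using R[of j l "E a j w"] r by simp
  have "E a j (E j j w - E j l (E l j w) + E l l (E j j w)) = 0" using R1 Ezero r by simp
  then have R3: "E a j (E j j w) - E a j (E j l (E l j w)) + E a j (E l l (E j j w)) = 0"
    using r by (simp add: Eadd Ediff)
  have e1: "E a j (E j l (E l j w)) = E j l (E a j (E l j w)) + E a l (E l j w)" using c2[of "E l j w"] by (simp add: algebra_simps)
  have e2: "E a j (E l j w) = E l j (E a j w)" using c3[of w] by simp
  have e3: "E a j (E l l (E j j w)) = E l l (E a j (E j j w))" using c4[of "E j j w"] by simp
  have e4: "E a j (E j j w) = E j j (E a j w) + E a j w" using c5[of w] by (simp add: algebra_simps)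
  have e5: "E a j (E l l w) = E l l (E a j w)" using c4[of w] by simp
  have "E l l (E a j (E j j w)) = E l l (E j j (E a j w)) + E l l (E a j w)" using e4 r by (simp add: Eadd)
  from R3 R2 e1 e2 e3 e4 e5 this
  have f1: "E a j w + (E j j (E a j w) + (E l l (E a j w) + E l l (E j j (E a j w)))) =
      E a l (E l j w) + E j l (E l j (E a j w))"
   and f2: "E j j (E a j w) + E l l (E j j (E a j w)) = E j l (E l j (E a j w))"
    by (simp_all add: algebra_simps)
  have "(E a j w + E l l (E a j w)) + E j l (E l j (E a j w)) = E a l (E l j w) + E j l (E l j (E a j w))"
    using f1 f2[symmetric] by (simp add: algebra_simps)
  then have "E a l (E l j w) = E a j w + E l l (E a j w)" by simp
  then show ?thesis using e5 by simp
qed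

lemma CL: assumes "wv mu v"
  shows "inr n W \<Longrightarrow> wt W = (\<lambda>_. 0) \<Longrightarrow> wact E W v = sc (cN W mu) v"
proof (induction "length W" arbitrary: W rule: less_induct)
  case less
  note IH = less.hyps
  have wvv: "\<And>j. j \<in> {1..n} \<Longrightarrow> E j j v = sc (mu j) v" using assms by (auto simp: wv_def)
  show ?case
  proof (cases W rule: rev_exhaust)
    case Nil then show ?thesis by simp
  next
    case (snoc A p)
    obtain l j where p: "p = (l,j)" by fastforce
    have lj: "l \<in> {1..n}" "j \<in> {1..n}" "inr n A" using less.prems snoc p by auto
    show ?thesis
    proof (cases "l = j")
      case True
      have w0: "wt [(j,j)] = (\<lambda>_. 0)" by (auto simp: shift_def)
      have "wt A = (\<lambda>_. 0)" using less.prems(2) snoc p True by (simp add: wt_append padd_def shift_def fun_eq_iff)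
      then have IA: "wact E A v = sc (cN A mu) v" using IH[of A] snoc lj by simp
      have "wact E W v = wact E A (E j j v)" using snoc p True by (simp add: wact_append)
      also have "\<dots> = sc (mu j * cN A mu) v" using wvv[of j] lj IA by (simp add: act_sc)
      also have "mu j * cN A mu = cN W mu" using snoc p True
        by (simp add: cN_append padd_def shift_def)
      finally show ?thesis .
    next
      case False
      have "wt W l = wt A l + 1" using snoc p False by (simp add: wt_append padd_def shift_def)
      then have "wt A l = -1" using less.prems(2) by (simp add: eq_neg_iff_add_eq_0)
      then obtain B0 a0 M0 where A: "A = B0 @ (a0,l) # M0" and a0: "a0 \<noteq> l"
        using exists_letter by blast
      have inner: "\<And>B a. length (B @ (a,l) # M @ [(l,j)]) = length W \<Longrightarrow> inr n (B @ (a,l) # M @ [(l,j)])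
         \<Longrightarrow> wt (B @ (a,l) # M @ [(l,j)]) = (\<lambda>_. 0) \<Longrightarrow> a \<noteq> l
         \<Longrightarrow> wact E (B @ (a,l) # M @ [(l,j)]) v = sc (cN (B @ (a,l) # M @ [(l,j)]) mu) v" for M
      proof (induction M)
        case (Nil B a)
        have W0: "B @ (a,l) # [] @ [(l,j)] = B @ [(a,l),(l,j)] @ []" by simp
        have ra: "a \<in> {1..n}" "inr n B" using Nil.prems by auto
        show ?case
        proof (cases "a = j")
          case True
          have wT: "wt [(j,l),(l,j)] = (\<lambda>_. 0)" by (auto simp: shift_def)
          have "wt B = (\<lambda>_. 0)" using Nil.prems(3) True unfolding W0 wt_BTR
            by (simp add: padd_def shift_def fun_eq_iff)
          then have IB: "wact E B v = sc (cN B mu) v" using IH[of B] Nil.prems ra by simp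
          have "E j j v - E j l (E l j v) + E l l (E j j v) = 0" using R[of j l v] lj False by simp
          then have "E j l (E l j v) = sc (mu j + mu j * mu l) v"
            using wvv lj by (simp add: Esc algebra_simps eq_diff_eq)
          then have "wact E (B @ (a,l) # [] @ [(l,j)]) v = sc ((mu j + mu j * mu l) * cN B mu) v"
            using True IB ra by (simp add: wact_append act_sc)
          also have "(mu j + mu j * mu l) * cN B mu = cN (B @ (a,l) # [] @ [(l,j)]) mu"
            unfolding W0 cN_BTR using True False by (simp add: wT padd_def shift_def algebra_simps)
          finally show ?thesis .
        next
          case False2: False
          have wT: "wt [(a,l),(l,j)] = wt [(a,j)]" by (auto simp: shift_def)
          have W1: "B @ [(a,j)] = B @ [(a,j)] @ []" by simp
          have "wt (B @ [(a,j)]) = (\<lambda>_. 0)" using Nil.prems(3) unfolding W0 wt_BTR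
            by (simp add: wt_append padd_def shift_def fun_eq_iff)
          then have IB: "wact E (B @ [(a,j)]) v = sc (cN (B @ [(a,j)]) mu) v"
            using IH[of "B @ [(a,j)]"] Nil.prems ra lj by simp
          have "E a l (E l j v) = sc (1 + mu l) (E a j v)"
            using derived[of a l j v] ra lj False False2 Nil.prems(4) wvv[of l]
            by (simp add: Esc algebra_simps)
          then have "wact E (B @ (a,l) # [] @ [(l,j)]) v = sc ((1 + mu l) * cN (B @ [(a,j)]) mu) v"
            using IB ra by (simp add: wact_append act_sc)
          also have "(1 + mu l) * cN (B @ [(a,j)]) mu = cN (B @ (a,l) # [] @ [(l,j)]) mu"
            unfolding W0 cN_BTR using False by (subst W1, subst cN_BTR) (simp add: wT padd_def shift_def algebra_simps)
          finally show ?thesis .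
        qed
      next
        case (Cons m M B a)
        obtain c d where m: "m = (c,d)" by fastforce
        define Rw where "Rw = M @ [(l,j)]"
        define u where "u = wact E Rw v"
        have ra: "a \<in> {1..n}" "inr n B" "c \<in> {1..n}" "d \<in> {1..n}" "inr n Rw"
          using Cons.prems m by (auto simp: Rw_def)
        have W0: "B @ (a,l) # (m # M) @ [(l,j)] = B @ [(a,l),(c,d)] @ Rw" by (simp add: m Rw_def)
        have W1: "(B @ [(c,d)]) @ (a,l) # M @ [(l,j)] = B @ [(c,d),(a,l)] @ Rw" by (simp add: Rw_def)
        have W2: "B @ (a,d) # M @ [(l,j)] = B @ [(a,d)] @ Rw" by (simp add: Rw_def)
        have W3: "B @ (c,l) # M @ [(l,j)] = B @ [(c,l)] @ Rw" by (simp add: Rw_def)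
        have wt1: "wt [(c,d),(a,l)] = wt [(a,l),(c,d)]" by (auto simp: shift_def)
        have wt2: "l = c \<Longrightarrow> wt [(a,d)] = wt [(a,l),(c,d)]" by (auto simp: shift_def)
        have wt3: "d = a \<Longrightarrow> wt [(c,l)] = wt [(a,l),(c,d)]" by (auto simp: shift_def)
        have wt0: "wt (B @ [(a,l),(c,d)] @ Rw) = (\<lambda>_. 0)" using Cons.prems(3) W0 by simp
        have wtW1: "wt (B @ [(c,d),(a,l)] @ Rw) = (\<lambda>_. 0)" using wt0 unfolding wt_BTR wt1 .
        have wtW2: "l = c \<Longrightarrow> wt (B @ [(a,d)] @ Rw) = (\<lambda>_. 0)" using wt0 unfolding wt_BTR using wt2 by simp
        have wtW3: "d = a \<Longrightarrow> wt (B @ [(c,l)] @ Rw) = (\<lambda>_. 0)" using wt0 unfolding wt_BTR using wt3 by simp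
        have len0: "length (B @ [(a,l),(c,d)] @ Rw) = length W" using Cons.prems(1) by (simp add: Rw_def)
        have I1': "wact E ((B @ [(c,d)]) @ (a,l) # M @ [(l,j)]) v = sc (cN ((B @ [(c,d)]) @ (a,l) # M @ [(l,j)]) mu) v"
        proof (rule Cons.IH)
          show "length ((B @ [(c,d)]) @ (a,l) # M @ [(l,j)]) = length W" using len0 unfolding W1 by simp
          show "inr n ((B @ [(c,d)]) @ (a,l) # M @ [(l,j)])" using ra lj unfolding W1 by simp
          show "wt ((B @ [(c,d)]) @ (a,l) # M @ [(l,j)]) = (\<lambda>_. 0)" using wtW1 unfolding W1 .
          show "a \<noteq> l" by fact
        qed
        have I1: "wact E (B @ [(c,d),(a,l)] @ Rw) v = sc (cN (B @ [(c,d),(a,l)] @ Rw) mu) v"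
          using I1' unfolding W1 .
        have I2: "wact E (B @ [(a,d)] @ Rw) v = sc (cN (B @ [(a,d)] @ Rw) mu) v" if "l = c"
        proof (rule IH)
          show "length (B @ [(a,d)] @ Rw) < length W" using len0 by simp
          show "inr n (B @ [(a,d)] @ Rw)" using ra by simp
          show "wt (B @ [(a,d)] @ Rw) = (\<lambda>_. 0)" using wtW2 that .
        qed
        have I3: "wact E (B @ [(c,l)] @ Rw) v = sc (cN (B @ [(c,l)] @ Rw) mu) v" if "d = a"
        proof (rule IH)
          show "length (B @ [(c,l)] @ Rw) < length W" using len0 by simp
          show "inr n (B @ [(c,l)] @ Rw)" using ra lj by simp
          show "wt (B @ [(c,l)] @ Rw) = (\<lambda>_. 0)" using wtW3 that .
        qed
        have cm: "E a l (E c d u) = E c d (E a l u) + (if l = c then E a d u else 0) - (if d = a then E c l u else 0)"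
          using comm[of a l c d u] ra lj by (simp add: algebra_simps)
        have "wact E (B @ [(a,l),(c,d)] @ Rw) v = wact E B (E a l (E c d u))"
          by (simp add: wact_append u_def)
        also have "\<dots> = wact E (B @ [(c,d),(a,l)] @ Rw) v + (if l = c then wact E (B @ [(a,d)] @ Rw) v else 0)
             - (if d = a then wact E (B @ [(c,l)] @ Rw) v else 0)"
          unfolding cm using ra by (simp add: act_add act_diff act_zero wact_append u_def)
        also have "\<dots> = sc (cN (B @ [(c,d),(a,l)] @ Rw) mu + (if l = c then cN (B @ [(a,d)] @ Rw) mu else 0)
             - (if d = a then cN (B @ [(c,l)] @ Rw) mu else 0)) v"
          using I1 I2 I3 by (auto simp: algebra_simps)
        also have "cN (B @ [(c,d),(a,l)] @ Rw) mu + (if l = c then cN (B @ [(a,d)] @ Rw) mu else 0)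
             - (if d = a then cN (B @ [(c,l)] @ Rw) mu else 0) = cN (B @ [(a,l),(c,d)] @ Rw) mu"
        proof -
          define P where "P = cN B (padd mu (padd (wt [(a,l),(c,d)]) (wt Rw)))"
          define nu where "nu = padd mu (wt Rw)"
          have e0: "cN (B @ [(a,l),(c,d)] @ Rw) mu = P * ((nu l + (if l = c then 1 else 0) - (if l = d then 1 else 0)) * nu d) * cN Rw mu"
            unfolding cN_BTR P_def nu_def by (simp add: shift_def)
          have e1: "cN (B @ [(c,d),(a,l)] @ Rw) mu = P * ((nu d + (if d = a then 1 else 0) - (if d = l then 1 else 0)) * nu l) * cN Rw mu"
            unfolding cN_BTR P_def nu_def wt1[symmetric] by (simp add: shift_def)
          have e2: "cN (B @ [(a,d)] @ Rw) mu = P * nu d * cN Rw mu" if h: "l = c"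
          proof -
            have "cN (B @ [(a,d)] @ Rw) mu = cN B (padd mu (padd (wt [(a,d)]) (wt Rw))) * cN [(a,d)] nu * cN Rw mu"
              unfolding nu_def by (rule cN_BTR)
            then show ?thesis using wt2[OF h] unfolding P_def by simp
          qed
          have e3: "cN (B @ [(c,l)] @ Rw) mu = P * nu l * cN Rw mu" if h: "d = a"
          proof -
            have "cN (B @ [(c,l)] @ Rw) mu = cN B (padd mu (padd (wt [(c,l)]) (wt Rw))) * cN [(c,l)] nu * cN Rw mu"
              unfolding nu_def by (rule cN_BTR)
            then show ?thesis using wt3[OF h] unfolding P_def by simp
          qed
          have e2': "(if l = c then cN (B @ [(a,d)] @ Rw) mu else 0) = (if l = c then P * nu d * cN Rw mu else 0)"
            using e2 by simp
          have e3': "(if d = a then cN (B @ [(c,l)] @ Rw) mu else 0) = (if d = a then P * nu l * cN Rw mu else 0)"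
            using e3 by simp
          show ?thesis unfolding e0 e1 e2' e3'
            by (cases "l = c"; cases "d = a"; cases "l = d") (simp_all add: algebra_simps)
        qed
        finally show ?case unfolding W0 .
      qed
      have "W = B0 @ (a0,l) # M0 @ [(l,j)]" using snoc p A by simp
      then show ?thesis using inner[of B0 a0 M0] less.prems a0 by simp
    qed
  qed
qed


lemma E_sum: assumes "l \<in> {1..n}" "j \<in> {1..n}" shows "E l j (sum f A) = (\<Sum>a\<in>A. E l j (f a))"
proof (induction A rule: infinite_finite_induct)
  case (infinite A) then show ?case using Ezero assms by simp
next
  case empty then show ?case using Ezero assms by simp
next
  case (insert x F) then show ?case using Eadd assms by simp
qed

lemma Ejj_comm: "j \<in> {1..n} \<Longrightarrow> k \<in> {1..n} \<Longrightarrow> E j j (E k k x) = E k k (E j j x)"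
  using comm[of j j k k x] by (cases "j = k") auto

lemma eig_indep: assumes j: "j \<in> {1..n}"
  shows "finite D \<Longrightarrow> (\<forall>d\<in>D. E j j (p d) = sc d (p d)) \<Longrightarrow> (\<Sum>d\<in>D. p d) = 0 \<Longrightarrow> \<forall>d\<in>D. p d = 0"
proof (induction D arbitrary: p rule: finite_induct)
  case empty then show ?case by simp
next
  case (insert d0 D)
  have s: "p d0 + (\<Sum>d\<in>D. p d) = 0" using insert by simp
  have ED: "E j j (\<Sum>d\<in>D. p d) = (\<Sum>d\<in>D. sc d (p d))"
  proof -
    have "E j j (\<Sum>d\<in>D. p d) = (\<Sum>d\<in>D. E j j (p d))" by (rule E_sum[OF j j])
    also have "\<dots> = (\<Sum>d\<in>D. sc d (p d))" using insert.prems(1) by (intro sum.cong) auto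
    finally show ?thesis .
  qed
  have E0: "E j j (p d0) = sc d0 (p d0)" using insert.prems(1) by auto
  have h1: "sc d0 (p d0) + (\<Sum>d\<in>D. sc d (p d)) = 0"
  proof -
    have "E j j (p d0 + (\<Sum>d\<in>D. p d)) = E j j (p d0) + E j j (\<Sum>d\<in>D. p d)" by (rule Eadd[OF j j])
    then have "E j j 0 = sc d0 (p d0) + (\<Sum>d\<in>D. sc d (p d))" unfolding s ED E0 .
    then show ?thesis using Ezero[OF j j] by simp
  qed
  have h2: "sc d0 (p d0) + (\<Sum>d\<in>D. sc d0 (p d)) = 0"
  proof -
    have "sc d0 (p d0 + (\<Sum>d\<in>D. p d)) = sc d0 (p d0) + (\<Sum>d\<in>D. sc d0 (p d))"
      by (simp only: scale_right_distrib scale_sum_right)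
    then show ?thesis unfolding s by simp
  qed
  have "(\<Sum>d\<in>D. sc d (p d)) - (\<Sum>d\<in>D. sc d0 (p d)) =
     (sc d0 (p d0) + (\<Sum>d\<in>D. sc d (p d))) - (sc d0 (p d0) + (\<Sum>d\<in>D. sc d0 (p d)))" by simp
  then have "(\<Sum>d\<in>D. sc d (p d)) - (\<Sum>d\<in>D. sc d0 (p d)) = 0" unfolding h1 h2 by simp
  then have "(\<Sum>d\<in>D. sc (d - d0) (p d)) = 0"
    by (simp only: scale_left_diff_distrib sum_subtractf)
  note z = this
  have m: "\<forall>d\<in>D. E j j (sc (d - d0) (p d)) = sc d (sc (d - d0) (p d))"
  proof
    fix d assume "d \<in> D"
    then have "E j j (p d) = sc d (p d)" using insert.prems(1) by auto
    then show "E j j (sc (d - d0) (p d)) = sc d (sc (d - d0) (p d))"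
      unfolding Esc[OF j j] by (simp only: scale_scale mult.commute)
  qed
  have "\<forall>d\<in>D. sc (d - d0) (p d) = 0" by (rule insert.IH[OF m z])
  then have D0: "\<forall>d\<in>D. p d = 0" using insert.hyps(2) by fastforce
  then have "p d0 = 0" using s by simp
  with D0 show ?case by simp
qed

lemma wv_sc: "wv mu x \<Longrightarrow> wv mu (sc c x)"
  by (simp add: wv_def Esc scale_left_commute)

lemma wv_indep:
  "finite L \<Longrightarrow> (\<forall>nu\<in>L. wv nu (p nu)) \<Longrightarrow> (\<forall>nu\<in>L. \<forall>nu'\<in>L. nu \<noteq> nu' \<longrightarrow> (\<exists>j\<in>{1..n}. nu j \<noteq> nu' j))
    \<Longrightarrow> sum p L = 0 \<Longrightarrow> \<forall>nu\<in>L. p nu = 0"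
proof (induction "card L" arbitrary: L p rule: less_induct)
  case less
  show ?case
  proof
    fix nu2 assume nu2: "nu2 \<in> L"
    show "p nu2 = 0"
    proof (cases "L = {nu2}")
      case True then show ?thesis using less.prems by simp
    next
      case False
      then obtain nu1 where nu1: "nu1 \<in> L" "nu1 \<noteq> nu2" using nu2 by blast
      then obtain j where j: "j \<in> {1..n}" "nu1 j \<noteq> nu2 j" using less.prems(3) nu2 by blast
      have ev: "E j j (p nu) = sc (nu j) (p nu)" if "nu \<in> L" for nu
        using less.prems(2) that j by (auto simp: wv_def)
      have h1: "(\<Sum>nu\<in>L. sc (nu j) (p nu)) = 0"
      proof -
        have "E j j (sum p L) = (\<Sum>nu\<in>L. E j j (p nu))" by (rule E_sum[OF j(1) j(1)])
        also have "\<dots> = (\<Sum>nu\<in>L. sc (nu j) (p nu))" using ev by (intro sum.cong) auto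
        finally show ?thesis using less.prems(4) Ezero[OF j(1) j(1)] by simp
      qed
      have h2: "(\<Sum>nu\<in>L. sc (nu1 j) (p nu)) = 0"
        using less.prems(4) by (simp only: scale_sum_right[symmetric] scale_zero_right)
      have "(\<Sum>nu\<in>L. sc (nu j - nu1 j) (p nu)) = (\<Sum>nu\<in>L. sc (nu j) (p nu)) - (\<Sum>nu\<in>L. sc (nu1 j) (p nu))"
        by (simp only: scale_left_diff_distrib sum_subtractf)
      then have "(\<Sum>nu\<in>L. sc (nu j - nu1 j) (p nu)) = 0" unfolding h1 h2 by simp
      moreover have "(\<Sum>nu\<in>L. sc (nu j - nu1 j) (p nu)) = (\<Sum>nu\<in>L - {nu1}. sc (nu j - nu1 j) (p nu))"
        using nu1 less.prems(1) by (simp add: sum.remove)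
      ultimately have z: "(\<Sum>nu\<in>L - {nu1}. sc (nu j - nu1 j) (p nu)) = 0" by simp
      have cl: "card (L - {nu1}) < card L" by (rule card_Diff1_less[OF less.prems(1) nu1(1)])
      have "\<forall>nu\<in>L - {nu1}. sc (nu j - nu1 j) (p nu) = 0"
      proof (rule less.hyps[OF cl])
        show "finite (L - {nu1})" using less.prems(1) by simp
        show "\<forall>nu\<in>L - {nu1}. wv nu (sc (nu j - nu1 j) (p nu))" using less.prems(2) wv_sc by blast
        show "\<forall>nu\<in>L - {nu1}. \<forall>nu'\<in>L - {nu1}. nu \<noteq> nu' \<longrightarrow> (\<exists>j\<in>{1..n}. nu j \<noteq> nu' j)"
          using less.prems(3) by blast
        show "(\<Sum>nu\<in>L - {nu1}. sc (nu j - nu1 j) (p nu)) = 0" by (rule z)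
      qed
      then have "sc (nu2 j - nu1 j) (p nu2) = 0" using nu1 nu2 by auto
      then show ?thesis using j by simp
    qed
  qed
qed

lemma exists_wv: assumes wm: "\<forall>j\<in>{1..n}. span {v. \<exists>c. E j j v = sc c v} = UNIV" and u: "(u::'v) \<noteq> 0"
  shows "\<exists>v mu. v \<noteq> 0 \<and> wv mu v"
proof -
  have "k \<le> n \<Longrightarrow> \<exists>v mu. v \<noteq> 0 \<and> (\<forall>j\<in>{1..k}. E j j v = sc (mu j) v)" for k
  proof (induction k)
    case 0
    show ?case using u by (intro exI[of _ u] exI[of _ "\<lambda>_. 0"]) simp
  next
    case (Suc k)
    then obtain v mu where v: "v \<noteq> 0" "\<forall>j\<in>{1..k}. E j j v = sc (mu j) v" by auto
    define J where "J = Suc k"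
    have J: "J \<in> {1..n}" using Suc.prems by (simp add: J_def)
    have "v \<in> span {v. \<exists>c. E J J v = sc c v}" using wm J by auto
    then obtain t r where t: "finite t" "t \<subseteq> {v. \<exists>c. E J J v = sc c v}" "v = (\<Sum>a\<in>t. sc (r a) a)"
      unfolding span_explicit by blast
    define ev where "ev a = (SOME c. E J J a = sc c a)" for a
    have evp: "E J J a = sc (ev a) a" if "a \<in> t" for a
      using t(2) that unfolding ev_def by (auto intro: someI_ex)
    define D where "D = ev ` t"
    define p where "p d = (\<Sum>a\<in>{a\<in>t. ev a = d}. sc (r a) a)" for d
    have vsum: "v = (\<Sum>d\<in>D. p d)" unfolding D_def p_def t(3) by (rule sum.image_gen[OF t(1)])
    have fD: "finite D" using t(1) D_def by simp
    have peig: "E J J (p d) = sc d (p d)" for d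
    proof -
      have "E J J (p d) = (\<Sum>a\<in>{a\<in>t. ev a = d}. E J J (sc (r a) a))" unfolding p_def by (rule E_sum[OF J J])
      also have "\<dots> = (\<Sum>a\<in>{a\<in>t. ev a = d}. sc d (sc (r a) a))"
      proof (rule sum.cong)
        fix a assume "a \<in> {a\<in>t. ev a = d}"
        then have "a \<in> t" "ev a = d" by auto
        then show "E J J (sc (r a) a) = sc d (sc (r a) a)"
          unfolding Esc[OF J J] using evp by (simp only: scale_scale mult.commute)
      qed simp
      also have "\<dots> = sc d (p d)" unfolding p_def by (simp only: scale_sum_right)
      finally show ?thesis .
    qed
    have pk: "E j j (p d) = sc (mu j) (p d)" if j: "j \<in> {1..k}" and d: "d \<in> D" for j d
    proof -
      have jn: "j \<in> {1..n}" using j Suc.prems by auto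
      define q where "q d = E j j (p d) - sc (mu j) (p d)" for d
      have "(\<Sum>d\<in>D. q d) = (\<Sum>d\<in>D. E j j (p d)) - (\<Sum>d\<in>D. sc (mu j) (p d))"
        unfolding q_def by (rule sum_subtractf)
      also have "\<dots> = E j j v - sc (mu j) v"
        unfolding vsum E_sum[OF jn jn] scale_sum_right by (rule refl)
      also have "\<dots> = 0" using v j by simp
      finally have z: "(\<Sum>d\<in>D. q d) = 0" .
      have "\<forall>d\<in>D. E J J (q d) = sc d (q d)"
      proof
        fix d
        have "E J J (q d) = E J J (E j j (p d)) - sc (mu j) (E J J (p d))"
          unfolding q_def Ediff[OF J J] Esc[OF J J] by (rule refl)
        also have "\<dots> = E j j (sc d (p d)) - sc (mu j) (sc d (p d))"
          unfolding Ejj_comm[OF J jn] peig by (rule refl)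
        also have "\<dots> = sc d (q d)" unfolding q_def Esc[OF jn jn] scale_right_diff_distrib
          by (simp only: scale_scale mult.commute)
        finally show "E J J (q d) = sc d (q d)" .
      qed
      then have "\<forall>d\<in>D. q d = 0" using eig_indep[OF J fD] z by blast
      then show ?thesis using d unfolding q_def by simp
    qed
    obtain d where d: "d \<in> D" "p d \<noteq> 0"
      using v(1) vsum by (metis (no_types, lifting) sum.neutral)
    show ?case
    proof (intro exI conjI)
      show "p d \<noteq> 0" by fact
      show "\<forall>j\<in>{1..Suc k}. E j j (p d) = sc ((mu(J := d)) j) (p d)"
        using pk[OF _ d(1)] peig[of d] by (auto simp: J_def)
    qed
  qed
  from this[of n] show ?thesis unfolding wv_def by auto
qed

end


lemma Nats_int: "(c::complex) \<in> \<nat> \<longleftrightarrow> (\<exists>m::int. m \<ge> 0 \<and> c = of_int m)"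
proof
  assume "c \<in> \<nat>" then obtain k where "c = of_nat k" by (auto elim: Nats_cases)
  then show "\<exists>m::int. m \<ge> 0 \<and> c = of_int m" by (intro exI[of _ "int k"]) simp
next
  assume "\<exists>m::int. m \<ge> 0 \<and> c = of_int m"
  then obtain m :: int where "m \<ge> 0" "c = of_int m" by auto
  then have "c = of_nat (nat m)" by simp
  then show "c \<in> \<nat>" by simp
qed

lemma Ints_int: "(c::complex) \<in> \<int> \<longleftrightarrow> (\<exists>m::int. c = of_int m)"
  by (auto simp: Ints_def)

lemma Xset_iff: "x \<in> Xset c \<longleftrightarrow> (if c \<in> \<nat> then (\<exists>m::int. m \<ge> 0 \<and> x = of_int m)
   else if c \<in> \<int> then (\<exists>m::int. m < 0 \<and> x = of_int m) else (\<exists>m::int. x = c + of_int m))"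
proof (cases "c \<in> \<nat>")
  case True
  have "x \<in> Xset c \<longleftrightarrow> x \<in> \<nat>" using True unfolding Xset_def by (auto elim: Nats_cases)
  then show ?thesis using True Nats_int by simp
next
  case F1: False
  show ?thesis
  proof (cases "c \<in> \<int>")
    case True
    have "x \<in> Xset c \<longleftrightarrow> (\<exists>k. x = - of_nat (Suc k))" using True F1 unfolding Xset_def by auto
    also have "\<dots> \<longleftrightarrow> (\<exists>m::int. m < 0 \<and> x = of_int m)"
    proof
      assume "\<exists>k. x = - of_nat (Suc k)"
      then obtain k where "x = - of_nat (Suc k)" by auto
      then show "\<exists>m::int. m < 0 \<and> x = of_int m" by (intro exI[of _ "- int (Suc k)"]) simp
    next
      assume "\<exists>m::int. m < 0 \<and> x = of_int m"
      then obtain m :: int where m: "m < 0" "x = of_int m" by auto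
      then have "m = - int (Suc (nat (- m - 1)))" by simp
      then have "x = - of_nat (Suc (nat (- m - 1)))" using m(2)
        by (metis of_int_minus of_int_of_nat_eq)
      then show "\<exists>k. x = - of_nat (Suc k)" by blast
    qed
    finally show ?thesis using True F1 by simp
  next
    case False
    then show ?thesis using F1 unfolding Xset_def by auto
  qed
qed

definition Gk :: "complex \<Rightarrow> complex \<Rightarrow> bool" where
  "Gk c x \<longleftrightarrow> (\<exists>m::int. x = c + of_int m) \<and> (c \<in> \<nat> \<longrightarrow> x \<in> \<nat>)"

definition Gset :: "nat \<Rightarrow> (nat \<Rightarrow> complex) \<Rightarrow> (nat \<Rightarrow> complex) set" where
  "Gset n lam = {rho. (\<forall>k\<in>{1..n}. Gk (lam k) (rho k)) \<and> (\<forall>k. k \<notin> {1..n} \<longrightarrow> rho k = 0)}"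

lemma X_G: assumes "x \<in> Xset c" shows "Gk c x"
proof (cases "c \<in> \<nat>")
  case True
  then obtain m0 :: int where m0: "c = of_int m0" using Nats_int by auto
  obtain m :: int where "m \<ge> 0" "x = of_int m" using assms True by (auto simp: Xset_iff)
  then show ?thesis unfolding Gk_def using m0 Nats_int
    by (auto intro!: exI[of _ "m - m0"])
next
  case F1: False
  show ?thesis
  proof (cases "c \<in> \<int>")
    case True
    then obtain m0 :: int where m0: "c = of_int m0" using Ints_int by auto
    obtain m :: int where "x = of_int m" using assms True F1 by (auto simp: Xset_iff)
    then show ?thesis unfolding Gk_def using m0 F1 by (auto intro!: exI[of _ "m - m0"])
  next
    case False
    then show ?thesis using assms F1 unfolding Gk_def by (auto simp: Xset_iff)
  qed
qed

lemma self_in_Xset: "c \<in> Xset c"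
proof (cases "c \<in> \<nat>")
  case True then show ?thesis by (auto simp: Xset_iff Nats_int)
next
  case F1: False
  show ?thesis
  proof (cases "c \<in> \<int>")
    case True
    then obtain m :: int where m: "c = of_int m" using Ints_int by auto
    have "m < 0"
    proof (rule ccontr)
      assume "\<not> m < 0" then have "c \<in> \<nat>" using m Nats_int by auto
      with F1 show False by simp
    qed
    then show ?thesis using True F1 m by (auto simp: Xset_iff)
  next
    case False then show ?thesis using F1 by (auto simp: Xset_iff intro: exI[of _ 0])
  qed
qed

lemma S_G: "Sset n lam \<subseteq> Gset n lam"
  unfolding Sset_def Gset_def using X_G by auto

lemma shift_apply: "shift rho a b k = rho k + (if k = a then 1 else 0) - (if k = b then 1 else 0)"
  by (simp add: shift_def)

lemma shift_eq_iff: "shift mu b a = rho \<longleftrightarrow> mu = shift rho a b"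
  by (auto simp: shift_def fun_eq_iff algebra_simps)

lemma wsum_shift: assumes "a \<in> {1..n}" "b \<in> {1..n}" shows "wsum n (shift rho a b) = wsum n rho"
proof -
  have "wsum n (shift rho a b) = wsum n rho + (\<Sum>i=1..n. (if i = a then 1 else 0)) - (\<Sum>i=1..n. (if i = b then 1 else 0))"
    unfolding wsum_def shift_def by (simp add: sum.distrib sum_subtractf)
  also have "\<dots> = wsum n rho" using assms by (simp add: sum.delta)
  finally show ?thesis .
qed

lemma Nats_minus1: "(x::complex) \<in> \<nat> \<Longrightarrow> x \<noteq> 0 \<Longrightarrow> x - 1 \<in> \<nat>"
proof -
  assume "x \<in> \<nat>" "x \<noteq> 0"
  then obtain m :: int where "m \<ge> 0" "x = of_int m" "m \<noteq> 0" using Nats_int by auto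
  then show "x - 1 \<in> \<nat>" using Nats_int by (auto intro!: exI[of _ "m - 1"])
qed

lemma G_step: assumes "rho \<in> Gset n lam" "rho b \<noteq> 0" "a \<in> {1..n}" "b \<in> {1..n}"
  shows "shift rho a b \<in> Gset n lam"
  unfolding Gset_def
proof (intro CollectI conjI ballI allI impI)
  fix k assume k: "k \<notin> {1..n}"
  then show "shift rho a b k = 0" using assms unfolding Gset_def shift_def by auto
next
  fix k assume k: "k \<in> {1..n}"
  then have g: "Gk (lam k) (rho k)" using assms(1) unfolding Gset_def by auto
  then obtain m :: int where m: "rho k = lam k + of_int m" unfolding Gk_def by auto
  have e: "shift rho a b k = lam k + of_int (m + (if k = a then 1 else 0) - (if k = b then 1 else 0))"
    using m by (simp add: shift_def)
  have "lam k \<in> \<nat> \<Longrightarrow> shift rho a b k \<in> \<nat>"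
  proof -
    assume L: "lam k \<in> \<nat>"
    then have rn: "rho k \<in> \<nat>" using g unfolding Gk_def by auto
    show "shift rho a b k \<in> \<nat>"
    proof (cases "k = b")
      case True
      then have "rho k - 1 \<in> \<nat>" using Nats_minus1[OF rn] assms(2) by simp
      then show ?thesis using True rn by (cases "a = b") (auto simp: shift_def)
    next
      case False then show ?thesis using rn by (auto simp: shift_def)
    qed
  qed
  then show "Gk (lam k) (shift rho a b k)" using e unfolding Gk_def by blast
qed

lemma back_in_S: assumes "rho \<in> Gset n lam" "shift rho a b \<in> Sset n lam" "rho b \<noteq> 0" "a \<in> {1..n}" "b \<in> {1..n}"
  shows "rho \<in> Sset n lam"
  unfolding Sset_def
proof (intro CollectI conjI ballI allI impI)
  fix k assume "k \<notin> {1..n}" then show "rho k = 0" using assms(1) unfolding Gset_def by auto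
next
  fix k assume k: "k \<in> {1..n}"
  have g: "Gk (lam k) (rho k)" using assms(1) k unfolding Gset_def by auto
  have x': "shift rho a b k \<in> Xset (lam k)" using assms(2) k unfolding Sset_def by auto
  show "rho k \<in> Xset (lam k)"
  proof (cases "lam k \<in> \<nat>")
    case True
    then have "rho k \<in> \<nat>" using g unfolding Gk_def by auto
    then show ?thesis using True Nats_int by (auto simp: Xset_iff)
  next
    case F1: False
    show ?thesis
    proof (cases "lam k \<in> \<int>")
      case True
      obtain m' :: int where m': "m' < 0" "shift rho a b k = of_int m'" using x' True F1 by (auto simp: Xset_iff)
      define e :: int where "e = (if k = b then 1 else 0) - (if k = a then 1 else 0)"
      have rk: "rho k = of_int (m' + e)" using m'(2) unfolding shift_def e_def by (auto simp: algebra_simps)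
      have "m' + e < 0"
      proof (cases "k = b \<and> a \<noteq> b")
        case True
        then have "e = 1" by (auto simp: e_def)
        moreover have "m' + e \<noteq> 0"
        proof
          assume "m' + e = 0" then have "rho k = 0" using rk by simp
          then show False using assms(3) True by simp
        qed
        ultimately show ?thesis using m'(1) by simp
      next
        case False then have "e \<le> 0" by (auto simp: e_def)
        then show ?thesis using m'(1) by simp
      qed
      then show ?thesis using rk True F1 by (auto simp: Xset_iff)
    next
      case False
      then show ?thesis using g F1 unfolding Gk_def by (auto simp: Xset_iff)
    qed
  qed
qed

definition Yv :: "nat \<Rightarrow> (nat \<Rightarrow> complex) \<Rightarrow> (nat \<Rightarrow> complex) \<Rightarrow> (nat \<Rightarrow> complex) \<Rightarrow> complex" where
  "Yv n lam mu = (\<lambda>nu. if nu = mu \<and> mu \<in> Sset n lam \<and> wsum n mu = wsum n lam then 1 else 0)"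

lemma NE_Y: assumes "a \<in> {1..n}" "b \<in> {1..n}" "rho \<in> Gset n lam"
  shows "NE n lam a b (Yv n lam rho) = (\<lambda>mu. rho b * Yv n lam (shift rho a b) mu)"
proof
  fix mu
  show "NE n lam a b (Yv n lam rho) mu = rho b * Yv n lam (shift rho a b) mu"
  proof (cases "mu = shift rho a b")
    case False
    then have "shift mu b a \<noteq> rho" using shift_eq_iff by metis
    then show ?thesis using False unfolding NE_def Yv_def by auto
  next
    case True
    then have sm: "shift mu b a = rho" using shift_eq_iff by metis
    have ws: "wsum n mu = wsum n rho" using True wsum_shift assms(1,2) by simp
    show ?thesis
    proof (cases "rho b = 0")
      case True then show ?thesis unfolding NE_def Yv_def using sm by simp
    next
      case False
      have "mu \<in> Sset n lam \<Longrightarrow> rho \<in> Sset n lam" using back_in_S[OF assms(3) _ False assms(1,2)] True by simp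
      then show ?thesis unfolding NE_def Yv_def using sm ws True by auto
    qed
  qed
qed

lemma NE_scale: "NE n lam a b (\<lambda>mu. c * f mu) = (\<lambda>mu. c * NE n lam a b f mu)"
  by (auto simp: NE_def fun_eq_iff)

lemma NE_sum: "NE n lam a b (\<lambda>mu. \<Sum>x\<in>C. g x mu) = (\<lambda>mu. \<Sum>x\<in>C. NE n lam a b (g x) mu)"
  by (auto simp: NE_def fun_eq_iff sum_distrib_left)

lemma act_Y: assumes "rho \<in> Gset n lam"
  shows "inr n X \<Longrightarrow> wact (NE n lam) X (Yv n lam rho) = (\<lambda>mu. cN X rho * Yv n lam (padd rho (wt X)) mu)
     \<and> (cN X rho \<noteq> 0 \<longrightarrow> padd rho (wt X) \<in> Gset n lam)"
proof (induction X)
  case Nil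
  have "padd rho (wt []) = rho" by (simp add: padd_def)
  then show ?case using assms by simp
next
  case (Cons p X)
  obtain a b where p: "p = (a,b)" by fastforce
  have ab: "a \<in> {1..n}" "b \<in> {1..n}" "inr n X" using Cons.prems p by auto
  define s where "s = padd rho (wt X)"
  have IH: "wact (NE n lam) X (Yv n lam rho) = (\<lambda>mu. cN X rho * Yv n lam s mu)"
     "cN X rho \<noteq> 0 \<Longrightarrow> s \<in> Gset n lam" using Cons.IH ab s_def by auto
  have pw: "padd rho (wt (p # X)) = shift s a b" by (simp add: p s_def padd_def shift_def fun_eq_iff)
  have cn: "cN (p # X) rho = s b * cN X rho" by (simp add: p s_def padd_def)
  show ?case
  proof (cases "cN X rho = 0")
    case True
    have "wact (NE n lam) (p # X) (Yv n lam rho) = NE n lam a b (\<lambda>mu. 0 * Yv n lam s mu)"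
      using IH True by (simp add: p)
    also have "\<dots> = (\<lambda>mu. 0)" by (simp only: NE_scale) simp
    finally show ?thesis using True cn by simp
  next
    case False
    have sG: "s \<in> Gset n lam" using IH(2) False by simp
    have "wact (NE n lam) (p # X) (Yv n lam rho) = NE n lam a b (\<lambda>mu. cN X rho * Yv n lam s mu)"
      using IH by (simp add: p)
    also have "\<dots> = (\<lambda>mu. cN X rho * (s b * Yv n lam (shift s a b) mu))"
      by (simp only: NE_scale NE_Y[OF ab(1,2) sG])
    finally have e: "wact (NE n lam) (p # X) (Yv n lam rho) = (\<lambda>mu. cN (p # X) rho * Yv n lam (padd rho (wt (p # X))) mu)"
      unfolding pw cn by (simp add: algebra_simps)
    have "cN (p # X) rho \<noteq> 0 \<longrightarrow> padd rho (wt (p # X)) \<in> Gset n lam"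
      unfolding pw cn using G_step[OF sG _ ab(1,2)] by simp
    with e show ?thesis by simp
  qed
qed



lemma Xup: assumes "x \<in> Xset c" "x + of_int m \<in> Xset c" "m > 0" shows "x + 1 \<in> Xset c"
proof (cases "c \<in> \<nat>")
  case True
  then obtain m0 :: int where "m0 \<ge> 0" "x = of_int m0" using assms(1) by (auto simp: Xset_iff)
  then show ?thesis using True by (auto simp: Xset_iff intro!: exI[of _ "m0 + 1"])
next
  case F1: False
  show ?thesis
  proof (cases "c \<in> \<int>")
    case True
    obtain m0 :: int where m0: "m0 < 0" "x = of_int m0" using assms(1) True F1 by (auto simp: Xset_iff)
    obtain m1 :: int where m1: "m1 < 0" "x + of_int m = of_int m1" using assms(2) True F1 by (auto simp: Xset_iff)
    have "of_int (m0 + m) = (of_int m1 :: complex)" using m0 m1 by simp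
    then have "m0 + m = m1" by (simp only: of_int_eq_iff)
    then have "m0 + 1 < 0" using m1(1) assms(3) by simp
    then show ?thesis using True F1 m0 by (auto simp: Xset_iff intro!: exI[of _ "m0 + 1"])
  next
    case False
    then obtain m0 :: int where "x = c + of_int m0" using assms(1) F1 by (auto simp: Xset_iff)
    then show ?thesis using False F1 by (auto simp: Xset_iff intro!: exI[of _ "m0 + 1"])
  qed
qed

lemma Xdown: assumes "x \<in> Xset c" "x + of_int m \<in> Xset c" "m < 0" shows "x - 1 \<in> Xset c \<and> x \<noteq> 0"
proof (cases "c \<in> \<nat>")
  case True
  obtain m0 :: int where m0: "m0 \<ge> 0" "x = of_int m0" using assms(1) True by (auto simp: Xset_iff)
  obtain m1 :: int where m1: "m1 \<ge> 0" "x + of_int m = of_int m1" using assms(2) True by (auto simp: Xset_iff)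
  have "of_int (m0 + m) = (of_int m1 :: complex)" using m0 m1 by simp
  then have "m0 + m = m1" by (simp only: of_int_eq_iff)
  then have "m0 \<ge> 1" using m1(1) assms(3) by simp
  then show ?thesis using True m0 by (auto simp: Xset_iff intro!: exI[of _ "m0 - 1"])
next
  case F1: False
  show ?thesis
  proof (cases "c \<in> \<int>")
    case True
    obtain m0 :: int where m0: "m0 < 0" "x = of_int m0" using assms(1) True F1 by (auto simp: Xset_iff)
    then show ?thesis using True F1 by (auto simp: Xset_iff intro!: exI[of _ "m0 - 1"])
  next
    case False
    then obtain m0 :: int where m0: "x = c + of_int m0" using assms(1) F1 by (auto simp: Xset_iff)
    have "x \<noteq> 0"
    proof
      assume "x = 0" then have "c = of_int (- m0)" using m0 by (simp add: eq_neg_iff_add_eq_0)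
      then have "c \<in> \<int>" using Ints_int by blast
      with False show False by simp
    qed
    then show ?thesis using m0 False F1 by (auto simp: Xset_iff intro!: exI[of _ "m0 - 1"])
  qed
qed

lemma wt_out: "inr n X \<Longrightarrow> k \<notin> {1..n} \<Longrightarrow> wt X k = 0"
proof (induction X)
  case Nil then show ?case by simp
next
  case (Cons p X) then show ?case by (cases p) (auto simp: shift_def)
qed

lemma int_sum_pos_neg: assumes "finite A" "(\<Sum>k\<in>A. d k) = (0::int)" "k0 \<in> A" "d k0 \<noteq> 0"
  shows "\<exists>a\<in>A. d a > 0" "\<exists>b\<in>A. d b < 0"
proof -
  show "\<exists>a\<in>A. d a > 0"
  proof (rule ccontr)
    assume H: "\<not> (\<exists>a\<in>A. d a > 0)"
    have nn: "\<forall>k\<in>A. 0 \<le> - d k" using H by (simp add: not_less)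
    have s: "(\<Sum>k\<in>A. - d k) = 0" using assms(2) by (simp add: sum_negf)
    have "(\<Sum>k\<in>A. - d k) = 0 \<longleftrightarrow> (\<forall>x\<in>A. - d x = 0)"
      by (rule sum_nonneg_eq_0_iff[OF assms(1)]) (use nn in auto)
    then have "\<forall>k\<in>A. - d k = 0" using s by simp
    then have "d k0 = 0" using assms(3) by simp
    then show False using assms(4) by simp
  qed
  show "\<exists>b\<in>A. d b < 0"
  proof (rule ccontr)
    assume H: "\<not> (\<exists>b\<in>A. d b < 0)"
    have nn: "\<forall>k\<in>A. 0 \<le> d k" using H by (simp add: not_less)
    have "(\<Sum>k\<in>A. d k) = 0 \<longleftrightarrow> (\<forall>x\<in>A. d x = 0)"
      by (rule sum_nonneg_eq_0_iff[OF assms(1)]) (use nn in auto)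
    then have "\<forall>k\<in>A. d k = 0" using assms(2) by simp
    then have "d k0 = 0" using assms(3) by simp
    then show False using assms(4) by simp
  qed
qed

lemma path: assumes rS: "rho \<in> Sset n lam" and mS: "mu \<in> Sset n lam" and ws: "wsum n rho = wsum n mu"
  shows "\<exists>Z. inr n Z \<and> padd rho (wt Z) = mu \<and> cN Z rho \<noteq> 0"
proof -
  have "\<forall>k\<in>{1..n}. \<exists>m::int. mu k = rho k + of_int m"
  proof
    fix k assume k: "k \<in> {1..n}"
    have "mu \<in> Gset n lam" "rho \<in> Gset n lam" using S_G rS mS by auto
    then have "Gk (lam k) (mu k)" "Gk (lam k) (rho k)" using k unfolding Gset_def by auto
    then obtain m1 m2 :: int where "mu k = lam k + of_int m1" "rho k = lam k + of_int m2"
      unfolding Gk_def by auto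
    then show "\<exists>m::int. mu k = rho k + of_int m" by (intro exI[of _ "m1 - m2"]) simp
  qed
  then have "\<exists>f. \<forall>k\<in>{1..n}. mu k = rho k + of_int (f k)" by (rule bchoice)
  then obtain d0 :: "nat \<Rightarrow> int" where d0: "\<forall>k\<in>{1..n}. mu k = rho k + of_int (d0 k)" by blast
  have main: "\<forall>rho d. rho \<in> Sset n lam \<and> wsum n rho = wsum n mu \<and> (\<forall>k\<in>{1..n}. mu k = rho k + of_int (d k))
     \<and> (\<Sum>k=1..n. nat \<bar>d k\<bar>) = N \<longrightarrow> (\<exists>Z. inr n Z \<and> padd rho (wt Z) = mu \<and> cN Z rho \<noteq> 0)" for N
  proof (induction N rule: less_induct)
    case (less N)
    show ?case
    proof (intro allI impI)
    fix rho d assume HH: "rho \<in> Sset n lam \<and> wsum n rho = wsum n mu \<and> (\<forall>k\<in>{1..n}. mu k = rho k + of_int (d k))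
     \<and> (\<Sum>k=1..n. nat \<bar>d k\<bar>) = N"
    then have prems: "rho \<in> Sset n lam" "wsum n rho = wsum n mu" "\<forall>k\<in>{1..n}. mu k = rho k + of_int (d k)"
       "(\<Sum>k=1..n. nat \<bar>d k\<bar>) = N" by auto
    show "\<exists>Z. inr n Z \<and> padd rho (wt Z) = mu \<and> cN Z rho \<noteq> 0"
    proof (cases "\<forall>k\<in>{1..n}. d k = 0")
      case True
      have "rho = mu"
      proof
        fix k show "rho k = mu k"
          using prems(1,3) mS True unfolding Sset_def by (cases "k \<in> {1..n}") auto
      qed
      then show ?thesis by (intro exI[of _ "[]"]) (simp add: padd_def)
    next
      case False
      then obtain k0 where k0: "k0 \<in> {1..n}" "d k0 \<noteq> 0" by auto
      have "wsum n mu = wsum n rho + of_int (\<Sum>k=1..n. d k)"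
        unfolding wsum_def using prems(3) by (simp add: sum.distrib)
      then have "of_int (\<Sum>k=1..n. d k) = (0::complex)" using prems(2) by simp
      then have sd: "(\<Sum>k=1..n. d k) = 0" by (simp only: of_int_eq_0_iff)
      obtain a where a: "a \<in> {1..n}" "d a > 0" using int_sum_pos_neg(1)[OF _ sd k0] by auto
      obtain b where b: "b \<in> {1..n}" "d b < 0" using int_sum_pos_neg(2)[OF _ sd k0] by auto
      have ab: "a \<noteq> b" using a b by auto
      define rho' where "rho' = shift rho a b"
      define d' where "d' = d(a := d a - 1, b := d b + 1)"
      have XA: "rho a \<in> Xset (lam a)" "mu a \<in> Xset (lam a)" using prems(1) mS a unfolding Sset_def by auto
      have XB: "rho b \<in> Xset (lam b)" "mu b \<in> Xset (lam b)" using prems(1) mS b unfolding Sset_def by auto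
      have up: "rho a + 1 \<in> Xset (lam a)" using Xup[OF XA(1) _ a(2)] XA(2) prems(3) a(1) by simp
      have dn: "rho b - 1 \<in> Xset (lam b)" "rho b \<noteq> 0" using Xdown[OF XB(1) _ b(2)] XB(2) prems(3) b(1) by auto
      have r'S: "rho' \<in> Sset n lam"
        unfolding Sset_def rho'_def
      proof (intro CollectI conjI ballI allI impI)
        fix k assume "k \<in> {1..n}"
        then show "shift rho a b k \<in> Xset (lam k)" using up dn ab prems(1) unfolding Sset_def
          by (auto simp: shift_def)
      next
        fix k assume "k \<notin> {1..n}"
        then show "shift rho a b k = 0" using a b prems(1) unfolding Sset_def by (auto simp: shift_def)
      qed
      have r'w: "wsum n rho' = wsum n mu" unfolding rho'_def using wsum_shift a(1) b(1) prems(2) by simp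
      have r'd: "\<forall>k\<in>{1..n}. mu k = rho' k + of_int (d' k)"
        using prems(3) ab unfolding rho'_def d'_def by (auto simp: shift_def)
      have lt: "(\<Sum>k=1..n. nat \<bar>d' k\<bar>) < N" unfolding prems(4)[symmetric]
      proof (rule sum_strict_mono_ex1)
        show "finite {1..n}" by simp
        show "\<forall>x\<in>{1..n}. nat \<bar>d' x\<bar> \<le> nat \<bar>d x\<bar>" using a b unfolding d'_def by auto
        show "\<exists>x\<in>{1..n}. nat \<bar>d' x\<bar> < nat \<bar>d x\<bar>" using a ab unfolding d'_def by (intro bexI[of _ a]) auto
      qed
      have "\<exists>Z. inr n Z \<and> padd rho' (wt Z) = mu \<and> cN Z rho' \<noteq> 0"
        using less.IH[OF lt, rule_format, OF conjI[OF r'S conjI[OF r'w conjI[OF r'd refl]]]] .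
      then obtain Z' where Z': "inr n Z'" "padd rho' (wt Z') = mu" "cN Z' rho' \<noteq> 0" by blast
      have e1: "padd rho (wt [(a,b)]) = rho'" unfolding rho'_def by (simp add: padd_def shift_def fun_eq_iff)
      show ?thesis
      proof (intro exI conjI)
        show "inr n (Z' @ [(a,b)])" using Z'(1) a b by simp
        show "padd rho (wt (Z' @ [(a,b)])) = mu"
        proof
          fix x
          have "padd rho (wt (Z' @ [(a,b)])) x = (rho x + wt [(a,b)] x) + wt Z' x"
            by (simp only: wt_append padd_def add.commute add.left_commute)
          also have "rho x + wt [(a,b)] x = rho' x" using e1 unfolding padd_def by metis
          also have "rho' x + wt Z' x = mu x" using Z'(2) unfolding padd_def by metis
          finally show "padd rho (wt (Z' @ [(a,b)])) x = mu x" .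
        qed
        show "cN (Z' @ [(a,b)]) rho \<noteq> 0" using Z'(3) e1 dn(2)
          by (simp add: cN_append)
      qed
    qed
    qed
  qed
  show ?thesis using main[rule_format, OF conjI[OF rS conjI[OF ws conjI[OF d0 refl]]]] .
qed



context G begin

lemma wv_zero: "wv mu 0" by (simp add: wv_def Ezero)
lemma wv_add: "wv mu x \<Longrightarrow> wv mu y \<Longrightarrow> wv mu (x + y)" by (simp add: wv_def Eadd scale_right_distrib)
lemma wv_sum: "(\<forall>a\<in>A. wv mu (f a)) \<Longrightarrow> wv mu (sum f A)"
proof (induction A rule: infinite_finite_induct)
  case (infinite A) then show ?case by (simp add: wv_zero)
next
  case empty then show ?case by (simp add: wv_zero)
next
  case (insert x F) then show ?case by (simp add: wv_add)
qed

lemma act_sum: "inr n X \<Longrightarrow> wact E X (sum f A) = (\<Sum>a\<in>A. wact E X (f a))"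
proof (induction A rule: infinite_finite_induct)
  case (infinite A) then show ?case by (simp add: act_zero)
next
  case empty then show ?case by (simp add: act_zero)
next
  case (insert x F) then show ?case by (simp add: act_add)
qed

end

locale H = G n sc E for n :: nat and sc :: "complex \<Rightarrow> 'v::ab_group_add \<Rightarrow> 'v" and E +
  fixes v0 :: 'v and lam :: "nat \<Rightarrow> complex"
  assumes v0ne: "v0 \<noteq> 0" and wv0: "wv lam v0" and lamS: "lam \<in> Sset n lam"
  and simple: "\<forall>W. gl_submodule n sc E W \<longrightarrow> W = {0} \<or> W = UNIV"
begin

definition FS :: "((nat \<times> nat) list \<Rightarrow> complex) \<Rightarrow> bool" where
  "FS r \<longleftrightarrow> finite {X. r X \<noteq> 0} \<and> (\<forall>X. r X \<noteq> 0 \<longrightarrow> inr n X)"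

definition evV :: "((nat \<times> nat) list \<Rightarrow> complex) \<Rightarrow> 'v" where
  "evV r = (\<Sum>X\<in>{X. r X \<noteq> 0}. sc (r X) (wact E X v0))"

definition AN :: "(nat \<times> nat) list \<Rightarrow> (nat \<Rightarrow> complex) \<Rightarrow> complex" where
  "AN X = wact (NE n lam) X (Yv n lam lam)"

definition evN :: "((nat \<times> nat) list \<Rightarrow> complex) \<Rightarrow> (nat \<Rightarrow> complex) \<Rightarrow> complex" where
  "evN r = (\<lambda>mu. \<Sum>X\<in>{X. r X \<noteq> 0}. r X * AN X mu)"

lemma evV_on: assumes "finite C" "{X. r X \<noteq> 0} \<subseteq> C" shows "evV r = (\<Sum>X\<in>C. sc (r X) (wact E X v0))"
  unfolding evV_def by (rule sum.mono_neutral_left[OF assms]) auto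

lemma evN_on: assumes "finite C" "{X. r X \<noteq> 0} \<subseteq> C" shows "evN r mu = (\<Sum>X\<in>C. r X * AN X mu)"
  unfolding evN_def by (rule sum.mono_neutral_left[OF assms]) auto

lemma FS_add: assumes "FS r" "FS r'" shows "FS (\<lambda>X. r X + r' X)"
proof -
  have "finite {X. r X + r' X \<noteq> 0}"
    by (rule finite_subset[of _ "{X. r X \<noteq> 0} \<union> {X. r' X \<noteq> 0}"]) (use assms in \<open>auto simp: FS_def\<close>)
  moreover have "\<forall>X. r X + r' X \<noteq> 0 \<longrightarrow> inr n X" using assms unfolding FS_def by force
  ultimately show ?thesis unfolding FS_def by blast
qed

lemma FS_scale: assumes "FS r" shows "FS (\<lambda>X. c * r X)"
proof -
  have "finite {X. c * r X \<noteq> 0}"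
    by (rule finite_subset[of _ "{X. r X \<noteq> 0}"]) (use assms in \<open>auto simp: FS_def\<close>)
  moreover have "\<forall>X. c * r X \<noteq> 0 \<longrightarrow> inr n X" using assms unfolding FS_def by force
  ultimately show ?thesis unfolding FS_def by blast
qed

lemma evV_add: assumes "FS r" "FS r'" shows "evV (\<lambda>X. r X + r' X) = evV r + evV r'"
proof -
  define C where "C = {X. r X \<noteq> 0} \<union> {X. r' X \<noteq> 0}"
  have fC: "finite C" using assms unfolding FS_def C_def by simp
  have "evV (\<lambda>X. r X + r' X) = (\<Sum>X\<in>C. sc (r X + r' X) (wact E X v0))"
    by (rule evV_on[OF fC]) (auto simp: C_def)
  also have "\<dots> = (\<Sum>X\<in>C. sc (r X) (wact E X v0)) + (\<Sum>X\<in>C. sc (r' X) (wact E X v0))"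
    by (simp add: scale_left_distrib sum.distrib)
  also have "\<dots> = evV r + evV r'"
    using evV_on[OF fC, of r] evV_on[OF fC, of r'] by (auto simp: C_def)
  finally show ?thesis .
qed

lemma evN_add: assumes "FS r" "FS r'" shows "evN (\<lambda>X. r X + r' X) mu = evN r mu + evN r' mu"
proof -
  define C where "C = {X. r X \<noteq> 0} \<union> {X. r' X \<noteq> 0}"
  have fC: "finite C" using assms unfolding FS_def C_def by simp
  have "evN (\<lambda>X. r X + r' X) mu = (\<Sum>X\<in>C. (r X + r' X) * AN X mu)"
    by (rule evN_on[OF fC]) (auto simp: C_def)
  also have "\<dots> = (\<Sum>X\<in>C. r X * AN X mu) + (\<Sum>X\<in>C. r' X * AN X mu)"
    by (simp add: distrib_right sum.distrib)
  also have "\<dots> = evN r mu + evN r' mu"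
    using evN_on[OF fC, of r] evN_on[OF fC, of r'] by (auto simp: C_def)
  finally show ?thesis .
qed

lemma evV_scale: assumes "FS r" shows "evV (\<lambda>X. c * r X) = sc c (evV r)"
proof -
  have fC: "finite {X. r X \<noteq> 0}" using assms unfolding FS_def by simp
  have "evV (\<lambda>X. c * r X) = (\<Sum>X\<in>{X. r X \<noteq> 0}. sc (c * r X) (wact E X v0))"
    by (rule evV_on[OF fC]) auto
  then show ?thesis unfolding evV_def by (simp add: scale_sum_right)
qed

lemma evN_scale: assumes "FS r" shows "evN (\<lambda>X. c * r X) mu = c * evN r mu"
proof -
  have fC: "finite {X. r X \<noteq> 0}" using assms unfolding FS_def by simp
  have "evN (\<lambda>X. c * r X) mu = (\<Sum>X\<in>{X. r X \<noteq> 0}. (c * r X) * AN X mu)"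
    by (rule evN_on[OF fC]) auto
  then show ?thesis unfolding evN_def by (simp add: sum_distrib_left mult.assoc)
qed

definition push :: "nat \<Rightarrow> nat \<Rightarrow> ((nat \<times> nat) list \<Rightarrow> complex) \<Rightarrow> ((nat \<times> nat) list \<Rightarrow> complex)" where
  "push a b r = (\<lambda>Y. case Y of [] \<Rightarrow> 0 | p # X \<Rightarrow> (if p = (a,b) then r X else 0))"

lemma push_supp: "{Y. push a b r Y \<noteq> 0} = (\<lambda>X. (a,b) # X) ` {X. r X \<noteq> 0}"
proof (rule set_eqI)
  fix Y show "Y \<in> {Y. push a b r Y \<noteq> 0} \<longleftrightarrow> Y \<in> (\<lambda>X. (a,b) # X) ` {X. r X \<noteq> 0}"
    by (cases Y) (auto simp: push_def)
qed

lemma FS_push: "FS r \<Longrightarrow> a \<in> {1..n} \<Longrightarrow> b \<in> {1..n} \<Longrightarrow> FS (push a b r)"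
  unfolding FS_def push_supp by (auto simp: push_def split: list.splits if_splits)

lemma evV_push: assumes "a \<in> {1..n}" "b \<in> {1..n}" shows "evV (push a b r) = E a b (evV r)"
proof -
  have "E a b (evV r) = (\<Sum>X\<in>{X. r X \<noteq> 0}. sc (r X) (wact E ((a,b) # X) v0))"
    unfolding evV_def E_sum[OF assms] by (simp add: Esc[OF assms])
  also have "\<dots> = (\<Sum>Y\<in>(\<lambda>X. (a,b) # X) ` {X. r X \<noteq> 0}. sc (push a b r Y) (wact E Y v0))"
    by (subst sum.reindex) (auto simp: inj_on_def push_def)
  finally show ?thesis unfolding evV_def push_supp by simp
qed

lemma evN_push: assumes "a \<in> {1..n}" "b \<in> {1..n}" shows "evN (push a b r) = NE n lam a b (evN r)"
proof -
  have "NE n lam a b (evN r) = (\<lambda>mu. \<Sum>X\<in>{X. r X \<noteq> 0}. NE n lam a b (\<lambda>nu. r X * AN X nu) mu)"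
    unfolding evN_def by (rule NE_sum)
  also have "\<dots> = (\<lambda>mu. \<Sum>X\<in>{X. r X \<noteq> 0}. r X * AN ((a,b) # X) mu)"
    unfolding NE_scale AN_def by simp
  also have "\<dots> = (\<lambda>mu. \<Sum>Y\<in>(\<lambda>X. (a,b) # X) ` {X. r X \<noteq> 0}. push a b r Y * AN Y mu)"
    by (subst sum.reindex) (auto simp: inj_on_def push_def)
  finally show ?thesis unfolding evN_def push_supp by simp
qed

definition delta :: "(nat \<times> nat) list \<Rightarrow> (nat \<times> nat) list \<Rightarrow> complex" where
  "delta Z = (\<lambda>X. if X = Z then 1 else 0)"

lemma FS_delta: "inr n Z \<Longrightarrow> FS (delta Z)"
  unfolding FS_def delta_def by auto

lemma evV_delta: "evV (delta Z) = wact E Z v0"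
proof -
  have "{X. delta Z X \<noteq> 0} = {Z}" by (auto simp: delta_def)
  then show ?thesis unfolding evV_def by (simp add: delta_def)
qed

lemma evN_delta: "evN (delta Z) = AN Z"
proof -
  have "{X. delta Z X \<noteq> 0} = {Z}" by (auto simp: delta_def)
  then show ?thesis unfolding evN_def by (simp add: delta_def)
qed

lemma FS_zero: "FS (\<lambda>_. 0)" unfolding FS_def by simp
lemma evV_zero: "evV (\<lambda>_. 0) = 0" unfolding evV_def by simp

lemma surj_evV: "\<exists>r. FS r \<and> evV r = v"
proof -
  define W where "W = {evV r | r. FS r}"
  have sub: "gl_submodule n sc E W"
    unfolding gl_submodule_def
  proof (intro conjI ballI)
    show "subspace W" unfolding subspace_def
    proof (intro conjI ballI allI)
      have "0 = evV (\<lambda>_. 0) \<and> FS (\<lambda>_. 0)" using FS_zero evV_zero by simp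
      then show "0 \<in> W" unfolding W_def by blast
    next
      fix x y assume "x \<in> W" "y \<in> W"
      then obtain r r' where "FS r" "FS r'" "x = evV r" "y = evV r'" unfolding W_def by auto
      then have "x + y = evV (\<lambda>X. r X + r' X) \<and> FS (\<lambda>X. r X + r' X)" using FS_add evV_add by simp
      then show "x + y \<in> W" unfolding W_def by blast
    next
      fix c x assume "x \<in> W"
      then obtain r where "FS r" "x = evV r" unfolding W_def by auto
      then have "sc c x = evV (\<lambda>X. c * r X) \<and> FS (\<lambda>X. c * r X)" using FS_scale evV_scale by simp
      then show "sc c x \<in> W" unfolding W_def by blast
    qed
  next
    fix l j w assume "l \<in> {1..n}" "j \<in> {1..n}" "w \<in> W"
    then obtain r where "FS r" "w = evV r" unfolding W_def by auto
    then have "E l j w = evV (push l j r) \<and> FS (push l j r)"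
      using FS_push evV_push \<open>l \<in> {1..n}\<close> \<open>j \<in> {1..n}\<close> by simp
    then show "E l j w \<in> W" unfolding W_def by blast
  qed
  have "v0 = evV (delta []) \<and> FS (delta [])" using FS_delta[of "[]"] evV_delta[of "[]"] by simp
  then have "v0 \<in> W" unfolding W_def by blast
  then have "W \<noteq> {0}" using v0ne by auto
  then have "W = UNIV" using simple sub by auto
  then have "v \<in> W" by simp
  then show ?thesis unfolding W_def by blast
qed

end


context H begin

lemma lamG: "lam \<in> Gset n lam" using lamS S_G by auto

lemma AN_eq: "inr n X \<Longrightarrow> AN X = (\<lambda>mu. cN X lam * Yv n lam (padd lam (wt X)) mu)"
  unfolding AN_def using act_Y[OF lamG] by blast

lemma evN_expand: assumes "FS r"
  shows "evN r mu = (\<Sum>X\<in>{X. r X \<noteq> 0}. r X * (cN X lam * Yv n lam (padd lam (wt X)) mu))"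
  unfolding evN_def
proof (rule sum.cong)
  fix X assume "X \<in> {X. r X \<noteq> 0}"
  then have "inr n X" using assms unfolding FS_def by auto
  then show "r X * AN X mu = r X * (cN X lam * Yv n lam (padd lam (wt X)) mu)" using AN_eq by simp
qed simp

lemma WD: assumes FSr: "FS r" and z: "evV r = 0" shows "evN r mu = 0"
proof -
  define C where "C = {X. r X \<noteq> 0}"
  have fC: "finite C" and inrC: "\<And>X. X \<in> C \<Longrightarrow> inr n X" using FSr unfolding FS_def C_def by auto
  define wf where "wf X = padd lam (wt X)" for X
  define L where "L = wf ` C"
  define p where "p nu = (\<Sum>X\<in>{X\<in>C. wf X = nu}. sc (r X) (wact E X v0))" for nu
  have "evV r = (\<Sum>nu\<in>L. p nu)" unfolding evV_def C_def[symmetric] L_def p_def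
    by (rule sum.image_gen[OF fC])
  then have sum0: "(\<Sum>nu\<in>L. p nu) = 0" using z by simp
  have wvp: "\<forall>nu\<in>L. wv nu (p nu)"
  proof
    fix nu assume "nu \<in> L"
    show "wv nu (p nu)" unfolding p_def
    proof (rule wv_sum, rule ballI)
      fix X assume X: "X \<in> {X\<in>C. wf X = nu}"
      then have "wv (wf X) (wact E X v0)" unfolding wf_def using wv_act[OF wv0 inrC] by auto
      then show "wv nu (sc (r X) (wact E X v0))" using X wv_sc by auto
    qed
  qed
  have dist: "\<forall>nu\<in>L. \<forall>nu'\<in>L. nu \<noteq> nu' \<longrightarrow> (\<exists>j\<in>{1..n}. nu j \<noteq> nu' j)"
  proof (intro ballI impI)
    fix nu nu' assume "nu \<in> L" "nu' \<in> L" "nu \<noteq> nu'"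
    then obtain X X' where X: "X \<in> C" "nu = wf X" and X': "X' \<in> C" "nu' = wf X'" unfolding L_def by auto
    show "\<exists>j\<in>{1..n}. nu j \<noteq> nu' j"
    proof (rule ccontr)
      assume "\<not> ?thesis"
      then have "\<forall>j\<in>{1..n}. nu j = nu' j" by auto
      moreover have "\<forall>j. j \<notin> {1..n} \<longrightarrow> nu j = nu' j"
        using X X' wt_out[OF inrC[OF X(1)]] wt_out[OF inrC[OF X'(1)]] unfolding wf_def padd_def by auto
      ultimately have "nu = nu'" by (auto simp: fun_eq_iff)
      with \<open>nu \<noteq> nu'\<close> show False by simp
    qed
  qed
  have pz: "\<forall>nu\<in>L. p nu = 0" using wv_indep[of L p] fC L_def wvp dist sum0 by auto
  have eN: "evN r mu = (\<Sum>X\<in>C. r X * (cN X lam * Yv n lam (wf X) mu))"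
    unfolding evN_expand[OF FSr] C_def wf_def by simp
  show ?thesis
  proof (cases "mu \<in> Sset n lam \<and> wsum n mu = wsum n lam")
    case False
    have "\<forall>X\<in>C. Yv n lam (wf X) mu = 0" using False unfolding Yv_def by auto
    then show ?thesis unfolding eN by simp
  next
    case True
    have "\<forall>X\<in>C. Yv n lam (wf X) mu = (if wf X = mu then 1 else 0)" using True unfolding Yv_def by auto
    then have "evN r mu = (\<Sum>X\<in>C. if wf X = mu then r X * cN X lam else 0)" unfolding eN
      by (intro sum.cong) auto
    also have "\<dots> = (\<Sum>X\<in>{X\<in>C. wf X = mu}. r X * cN X lam)"
      by (rule sum.inter_filter[symmetric, OF fC])
    finally have eN2: "evN r mu = (\<Sum>X\<in>{X\<in>C. wf X = mu}. r X * cN X lam)" .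
    show ?thesis
    proof (cases "mu \<in> L")
      case False
      then have em: "{X\<in>C. wf X = mu} = {}" unfolding L_def by auto
      show ?thesis using eN2 unfolding em by simp
    next
      case True2: True
      have pmu: "p mu = 0" using pz True2 by auto
      obtain Z where Z: "inr n Z" "padd mu (wt Z) = lam" "cN Z mu \<noteq> 0"
        using path[of mu n lam lam] True lamS by auto
      have actZX: "wact E (Z @ X) v0 = sc (cN Z mu * cN X lam) v0" if X: "X \<in> {X\<in>C. wf X = mu}" for X
      proof -
        have iX: "inr n X" and wX: "wf X = mu" using X inrC by auto
        have "wt (Z @ X) = (\<lambda>_. 0)"
        proof
          fix i
          have "lam i + wt X i = mu i" using wX unfolding wf_def padd_def by metis
          moreover have "mu i + wt Z i = lam i" using Z(2) unfolding padd_def by metis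
          ultimately show "wt (Z @ X) i = 0" unfolding wt_append padd_def
            by (metis add.commute add.left_commute add_cancel_left_right)
        qed
        then have "wact E (Z @ X) v0 = sc (cN (Z @ X) lam) v0" using CL[OF wv0] Z(1) iX by simp
        also have "cN (Z @ X) lam = cN Z mu * cN X lam" using wX unfolding cN_append wf_def by simp
        finally show ?thesis .
      qed
      have "0 = wact E Z (p mu)" using pmu act_zero[OF Z(1)] by simp
      also have "\<dots> = (\<Sum>X\<in>{X\<in>C. wf X = mu}. sc (r X) (wact E (Z @ X) v0))"
        unfolding p_def act_sum[OF Z(1)] act_sc[OF Z(1)] wact_append by (rule refl)
      also have "\<dots> = (\<Sum>X\<in>{X\<in>C. wf X = mu}. sc (cN Z mu * (r X * cN X lam)) v0)"
        using actZX by (intro sum.cong) (auto simp: algebra_simps)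
      also have "\<dots> = sc (cN Z mu * (\<Sum>X\<in>{X\<in>C. wf X = mu}. r X * cN X lam)) v0"
        by (simp add: scale_sum_left sum_distrib_left)
      finally have "cN Z mu * (\<Sum>X\<in>{X\<in>C. wf X = mu}. r X * cN X lam) = 0" using v0ne by simp
      then show ?thesis using eN2 Z(3) by simp
    qed
  qed
qed

definition phi :: "'v \<Rightarrow> (nat \<Rightarrow> complex) \<Rightarrow> complex" where
  "phi v = evN (SOME r. FS r \<and> evV r = v)"

lemma phi_ev: assumes "FS r" shows "phi (evV r) = evN r"
proof
  fix mu
  define r0 where "r0 = (SOME r'. FS r' \<and> evV r' = evV r)"
  have r0: "FS r0" "evV r0 = evV r" unfolding r0_def using someI_ex[OF surj_evV[of "evV r"]] by auto
  define rd where "rd = (\<lambda>X. r0 X + (- 1) * r X)"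
  have FSm: "FS (\<lambda>X. (- 1) * r X)" by (rule FS_scale[OF assms])
  have FSrd: "FS rd" unfolding rd_def by (rule FS_add[OF r0(1) FSm])
  have "evV rd = evV r0 + evV (\<lambda>X. (- 1) * r X)" unfolding rd_def by (rule evV_add[OF r0(1) FSm])
  also have "evV (\<lambda>X. (- 1) * r X) = sc (- 1) (evV r)" by (rule evV_scale[OF assms])
  finally have "evV rd = 0" using r0(2) by simp
  then have "evN rd mu = 0" using WD FSrd by blast
  moreover have "evN rd mu = evN r0 mu + evN (\<lambda>X. (- 1) * r X) mu" unfolding rd_def by (rule evN_add[OF r0(1) FSm])
  moreover have "evN (\<lambda>X. (- 1) * r X) mu = (- 1) * evN r mu" by (rule evN_scale[OF assms])
  ultimately have "evN r0 mu = evN r mu" by simp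
  then show "phi (evV r) mu = evN r mu" unfolding phi_def r0_def by simp
qed

lemma phi_add: "phi (u + v) mu = phi u mu + phi v mu"
proof -
  obtain r r' where r: "FS r" "evV r = u" and r': "FS r'" "evV r' = v" using surj_evV by metis
  have "u + v = evV (\<lambda>X. r X + r' X)" using evV_add r r' by simp
  then have "phi (u + v) = evN (\<lambda>X. r X + r' X)" using phi_ev FS_add r r' by simp
  moreover have "phi u = evN r" "phi v = evN r'" using phi_ev r r' by auto
  ultimately show ?thesis using evN_add r r' by simp
qed

lemma phi_scale: "phi (sc c v) mu = c * phi v mu"
proof -
  obtain r where r: "FS r" "evV r = v" using surj_evV by metis
  have "sc c v = evV (\<lambda>X. c * r X)" using evV_scale r by simp
  then have "phi (sc c v) = evN (\<lambda>X. c * r X)" using phi_ev FS_scale r by simp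
  moreover have "phi v = evN r" using phi_ev r by auto
  ultimately show ?thesis using evN_scale r by simp
qed

lemma phi_E: assumes "l \<in> {1..n}" "j \<in> {1..n}" shows "phi (E l j v) = NE n lam l j (phi v)"
proof -
  obtain r where r: "FS r" "evV r = v" using surj_evV by metis
  have "E l j v = evV (push l j r)" using evV_push[OF assms] r by simp
  then have "phi (E l j v) = evN (push l j r)" using phi_ev FS_push[OF r(1) assms] by simp
  moreover have "phi v = evN r" using phi_ev r by auto
  ultimately show ?thesis using evN_push[OF assms] by simp
qed

lemma phi_zero: "phi 0 mu = 0"
  using phi_add[of 0 0 mu] by simp

lemma phi_sum: "phi (sum g A) mu = (\<Sum>x\<in>A. phi (g x) mu)"
proof (induction A rule: infinite_finite_induct)
  case (infinite A) then show ?case by (simp add: phi_zero)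
next
  case empty then show ?case by (simp add: phi_zero)
next
  case (insert x F) then show ?case by (simp add: phi_add)
qed

lemma phi_act: "inr n Z \<Longrightarrow> phi (wact E Z v0) = (\<lambda>mu. cN Z lam * Yv n lam (padd lam (wt Z)) mu)"
  using phi_ev[OF FS_delta[of Z]] evV_delta evN_delta AN_eq by simp

lemma phi_inj: "inj phi"
proof -
  define K where "K = {v. \<forall>mu. phi v mu = 0}"
  have sub: "gl_submodule n sc E K"
    unfolding gl_submodule_def
  proof (intro conjI ballI)
    show "subspace K" unfolding subspace_def K_def by (simp add: phi_zero phi_add phi_scale)
  next
    fix l j w assume "l \<in> {1..n}" "j \<in> {1..n}" "w \<in> K"
    then show "E l j w \<in> K" unfolding K_def using phi_E by (simp add: NE_def)
  qed
  have "phi v0 lam = 1"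
    using phi_act[of "[]"] lamS by (simp add: Yv_def padd_def)
  then have "v0 \<notin> K" unfolding K_def by force
  then have "K = {0}" using simple sub by auto
  show ?thesis
  proof (rule injI)
    fix u v assume "phi u = phi v"
    have "phi u mu = phi (u - v) mu + phi v mu" for mu using phi_add[of "u - v" v mu] by simp
    then have "u - v \<in> K" unfolding K_def using \<open>phi u = phi v\<close> by simp
    then show "u = v" using \<open>K = {0}\<close> by simp
  qed
qed

lemma phi_into: "phi v \<in> Nspace n lam"
proof -
  obtain r where r: "FS r" "evV r = v" using surj_evV by metis
  define C where "C = {X. r X \<noteq> 0}"
  have fC: "finite C" using r unfolding FS_def C_def by auto
  have e: "phi v mu = (\<Sum>X\<in>C. r X * (cN X lam * Yv n lam (padd lam (wt X)) mu))" for mu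
    using phi_ev[OF r(1)] r(2) evN_expand[OF r(1)] unfolding C_def by simp
  have nz: "\<exists>X\<in>C. mu = padd lam (wt X) \<and> mu \<in> Sset n lam \<and> wsum n mu = wsum n lam" if "phi v mu \<noteq> 0" for mu
  proof (rule ccontr)
    assume "\<not> ?thesis"
    then have "\<forall>X\<in>C. Yv n lam (padd lam (wt X)) mu = 0" unfolding Yv_def by auto
    then have "phi v mu = 0" unfolding e by simp
    with that show False by simp
  qed
  have "{mu. phi v mu \<noteq> 0} \<subseteq> (\<lambda>X. padd lam (wt X)) ` C" using nz by blast
  then have "finite {mu. phi v mu \<noteq> 0}" using fC finite_subset by blast
  moreover have "\<forall>mu. phi v mu \<noteq> 0 \<longrightarrow> mu \<in> Sset n lam \<and> wsum n mu = wsum n lam" using nz by blast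
  ultimately show ?thesis unfolding Nspace_def by blast
qed

lemma phi_onto: assumes f: "f \<in> Nspace n lam" shows "f \<in> range phi"
proof -
  define F where "F = {mu. f mu \<noteq> 0}"
  have fF: "finite F" and FS: "\<And>mu. mu \<in> F \<Longrightarrow> mu \<in> Sset n lam \<and> wsum n mu = wsum n lam"
    using f unfolding Nspace_def F_def by auto
  define Zf where "Zf mu = (SOME Z. inr n Z \<and> padd lam (wt Z) = mu \<and> cN Z lam \<noteq> 0)" for mu
  have Zf: "inr n (Zf mu) \<and> padd lam (wt (Zf mu)) = mu \<and> cN (Zf mu) lam \<noteq> 0" if "mu \<in> F" for mu
  proof -
    have "\<exists>Z. inr n Z \<and> padd lam (wt Z) = mu \<and> cN Z lam \<noteq> 0"
      using path[OF lamS, of mu] FS[OF that] by simp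
    then show ?thesis unfolding Zf_def by (rule someI_ex)
  qed
  define v where "v = (\<Sum>mu\<in>F. sc (f mu / cN (Zf mu) lam) (wact E (Zf mu) v0))"
  have "phi v = f"
  proof
    fix nu
    have "phi v nu = (\<Sum>mu\<in>F. f mu / cN (Zf mu) lam * (cN (Zf mu) lam * Yv n lam mu nu))"
      unfolding v_def phi_sum phi_scale
    proof (rule sum.cong)
      fix mu assume "mu \<in> F"
      then show "f mu / cN (Zf mu) lam * phi (wact E (Zf mu) v0) nu = f mu / cN (Zf mu) lam * (cN (Zf mu) lam * Yv n lam mu nu)"
        using Zf phi_act by simp
    qed simp
    also have "\<dots> = (\<Sum>mu\<in>F. if nu = mu then f mu else 0)"
    proof (rule sum.cong)
      fix mu assume "mu \<in> F"
      then show "f mu / cN (Zf mu) lam * (cN (Zf mu) lam * Yv n lam mu nu) = (if nu = mu then f mu else 0)"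
        using Zf FS unfolding Yv_def by auto
    qed simp
    also have "\<dots> = f nu" using fF by (simp add: sum.delta' F_def)
    finally show "phi v nu = f nu" .
  qed
  then show ?thesis by blast
qed

lemma iso: "iso_to_N n sc E lam"
  unfolding iso_to_N_def
proof (intro exI conjI allI ballI)
  show "phi (u + v) mu = phi u mu + phi v mu" for u v mu by (rule phi_add)
  show "phi (sc c v) mu = c * phi v mu" for c v mu by (rule phi_scale)
  show "phi (E l j v) = NE n lam l j (phi v)" if "l \<in> {1..n}" "j \<in> {1..n}" for l j v using phi_E that by simp
  show "bij_betw phi UNIV (Nspace n lam)"
    unfolding bij_betw_def using phi_inj phi_into phi_onto by auto
qed

end


theorem lemma2p5:
  fixes n :: nat and sc :: "complex \<Rightarrow> 'v::ab_group_add \<Rightarrow> 'v"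
    and E :: "nat \<Rightarrow> nat \<Rightarrow> 'v \<Rightarrow> 'v"
  assumes "n \<ge> 2"
    and "glrep n sc E"
    and "weight_gl_module n sc E"
    and "simple_gl_module n sc E"
    and "\<forall>l\<in>{1..n}. \<forall>j\<in>{1..n}. l \<noteq> j \<longrightarrow>
           (\<forall>v. E l l v - E l j (E j l v) + E j j (E l l v) = 0)"
  shows "\<exists>lam. iso_to_N n sc E lam"
proof -
  have VS: "vector_space sc" and lin: "\<forall>l\<in>{1..n}. \<forall>j\<in>{1..n}. Vector_Spaces.linear sc sc (E l j)"
    and cm: "\<forall>i\<in>{1..n}. \<forall>j\<in>{1..n}. \<forall>k\<in>{1..n}. \<forall>m\<in>{1..n}. \<forall>v.
        E i j (E k m v) - E k m (E i j v) =
        (if j = k then E i m v else 0) - (if m = i then E k j v else 0)"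
    using assms(2) unfolding glrep_def by auto
  interpret G n sc E
  proof (rule G.intro)
    show "vector_space sc" by (rule VS)
  next
    fix l j x y assume "l \<in> {1..n}" "j \<in> {1..n}"
    then have "Vector_Spaces.linear sc sc (E l j)" using lin by blast
    then show "E l j (x + y) = E l j x + E l j y" by (simp add: Vector_Spaces.linear_iff)
  next
    fix l j c x assume "l \<in> {1..n}" "j \<in> {1..n}"
    then have "Vector_Spaces.linear sc sc (E l j)" using lin by blast
    then show "E l j (sc c x) = sc c (E l j x)" by (simp add: Vector_Spaces.linear_iff)
  next
    fix i j k m v assume "i \<in> {1..n}" "j \<in> {1..n}" "k \<in> {1..n}" "m \<in> {1..n}"
    then show "E i j (E k m v) - E k m (E i j v) =
        (if j = k then E i m v else 0) - (if m = i then E k j v else 0)" using cm by blast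
  next
    fix l j v assume "l \<in> {1..n}" "j \<in> {1..n}" "l \<noteq> j"
    then show "E l l v - E l j (E j l v) + E j j (E l l v) = 0" using assms(5) by blast
  qed
  obtain u :: 'v where u: "u \<noteq> 0" using assms(4) unfolding simple_gl_module_def by blast
  have simple: "\<forall>W. gl_submodule n sc E W \<longrightarrow> W = {0} \<or> W = UNIV"
    using assms(4) unfolding simple_gl_module_def by blast
  have wm: "\<forall>j\<in>{1..n}. span {v. \<exists>c. E j j v = sc c v} = UNIV"
    using assms(3) unfolding weight_gl_module_def by blast
  obtain v0 mu0 where v0: "v0 \<noteq> 0" "wv mu0 v0" using exists_wv[OF wm u] by blast
  define lam where "lam = (\<lambda>k. if k \<in> {1..n} then mu0 k else 0)"
  have wl: "wv lam v0" using v0(2) unfolding wv_def lam_def by simp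
  have lS: "lam \<in> Sset n lam" unfolding Sset_def using self_in_Xset by (auto simp: lam_def)
  interpret H n sc E v0 lam
    by unfold_locales (use v0(1) wl lS simple in auto)
  show ?thesis using iso by blast
qed

end
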